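(* Let $H$ be an undirected graph and let $I$ be an induced minor of $H$. Then $\mathrm{dtd}(I)\le\mathrm{dtd}(H)$.
   Context: A graph $I$ is an induced minor of $H$ if it can be obtained from $H$ by deleting vertices and contracting edges. For a DAG $\vec H$, a source is a vertex of in-degree $0$. A DAG elimination forest of a DAG $\vec H$ is defined recursively: if $\vec H$ is empty, it is the empty forest; if the underlying undirected graph of $\vec H$ is disconnected, it is the union of DAG elimination forests (trees) of its connected components; if the underlying graph is connected and $\vec H$ has exactly one source $s$, it is the single-node tree $s$; otherwise (connected, at least two sources) it is a tree whose root is an arbitrarily chosen source $s$ of $\vec H$ and whose subtrees are the trees of a DAG elimination forest of the DAG obtained from $\vec H$ by deleting $s$ and all vertices reachable from $s$. The depth of a rooted forest is the maximum number of nodes on a root-to-leaf path. $\mathrm{dtd}(\vec H)$ is the minimum depth of a DAG elimination forest of $\vec H$; for an undirected graph $H$, $\mathrm{dtd}(H)$ is the maximum of $\mathrm{dtd}(\vec H)$ over all acyclic orientations $\vec H$ of $H$. *)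

theory Defs
  imports Main
begin

definition ugraph :: "'a set \<Rightarrow> 'a set set \<Rightarrow> bool" where
  "ugraph V E \<longleftrightarrow> finite V \<and> E \<subseteq> {{u, v} | u v. u \<in> V \<and> v \<in> V \<and> u \<noteq> v}"

definition delete_vertex :: "'a \<Rightarrow> 'a set \<times> 'a set set \<Rightarrow> 'a set \<times> 'a set set" where
  "delete_vertex x G = (fst G - {x}, {e \<in> snd G. x \<notin> e})"

text \<open>Contract the edge {u,v}; the merged vertex keeps the name u.\<close>
definition contract_edge :: "'a \<Rightarrow> 'a \<Rightarrow> 'a set \<times> 'a set set \<Rightarrow> 'a set \<times> 'a set set" where
  "contract_edge u v G = (fst G - {v},
     {e \<in> snd G. v \<notin> e} \<union> {{u, w} | w. {v, w} \<in> snd G \<and> w \<noteq> u})"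

inductive obtainable :: "'a set \<times> 'a set set \<Rightarrow> 'a set \<times> 'a set set \<Rightarrow> bool" where
  refl: "obtainable G G"
| del: "obtainable G G' \<Longrightarrow> x \<in> fst G' \<Longrightarrow> obtainable G (delete_vertex x G')"
| con: "obtainable G G' \<Longrightarrow> {u, v} \<in> snd G' \<Longrightarrow> u \<noteq> v \<Longrightarrow> obtainable G (contract_edge u v G')"

definition graph_iso :: "'b set \<Rightarrow> 'b set set \<Rightarrow> 'a set \<Rightarrow> 'a set set \<Rightarrow> bool" where
  "graph_iso V1 E1 V2 E2 \<longleftrightarrow> (\<exists>f. bij_betw f V1 V2 \<and>
     (\<forall>x\<in>V1. \<forall>y\<in>V1. {x, y} \<in> E1 \<longleftrightarrow> {f x, f y} \<in> E2))"

definition induced_minor :: "'b set \<Rightarrow> 'b set set \<Rightarrow> 'a set \<Rightarrow> 'a set set \<Rightarrow> bool" where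
  "induced_minor VI EI VH EH \<longleftrightarrow>
     (\<exists>G'. obtainable (VH, EH) G' \<and> graph_iso VI EI (fst G') (snd G'))"

definition acyclic_orientation :: "'a set \<Rightarrow> 'a set set \<Rightarrow> ('a \<times> 'a) set \<Rightarrow> bool" where
  "acyclic_orientation V E A \<longleftrightarrow>
     A \<subseteq> {(u, v). {u, v} \<in> E} \<and>
     (\<forall>u v. {u, v} \<in> E \<longrightarrow> u \<noteq> v \<longrightarrow> ((u, v) \<in> A \<longleftrightarrow> (v, u) \<notin> A)) \<and>
     acyclic A"

definition restrict_arcs :: "'a set \<Rightarrow> ('a \<times> 'a) set \<Rightarrow> ('a \<times> 'a) set" where
  "restrict_arcs X A = A \<inter> (X \<times> X)"

definition is_source :: "'a set \<Rightarrow> ('a \<times> 'a) set \<Rightarrow> 'a \<Rightarrow> bool" where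
  "is_source V A s \<longleftrightarrow> s \<in> V \<and> (\<forall>u. (u, s) \<notin> restrict_arcs V A)"

definition reach :: "'a set \<Rightarrow> ('a \<times> 'a) set \<Rightarrow> 'a \<Rightarrow> 'a set" where
  "reach V A s = {v \<in> V. (s, v) \<in> (restrict_arcs V A)\<^sup>*}"

definition component :: "'a set \<Rightarrow> ('a \<times> 'a) set \<Rightarrow> 'a \<Rightarrow> 'a set" where
  "component V A v = {w \<in> V. (v, w) \<in> (restrict_arcs V A \<union> (restrict_arcs V A)\<inverse>)\<^sup>*}"

definition components :: "'a set \<Rightarrow> ('a \<times> 'a) set \<Rightarrow> 'a set set" where
  "components V A = component V A ` V"

definition uconnected :: "'a set \<Rightarrow> ('a \<times> 'a) set \<Rightarrow> bool" where
  "uconnected V A \<longleftrightarrow> V \<noteq> {} \<and> (\<forall>v\<in>V. component V A v = V)"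

inductive elim_depth :: "'a set \<Rightarrow> ('a \<times> 'a) set \<Rightarrow> nat \<Rightarrow> bool" where
  empty: "elim_depth {} A 0"
| disconn: "V \<noteq> {} \<Longrightarrow> \<not> uconnected V A \<Longrightarrow>
            (\<forall>C\<in>components V A. elim_depth C A (d C)) \<Longrightarrow>
            elim_depth V A (Max (d ` components V A))"
| one_source: "uconnected V A \<Longrightarrow> is_source V A s \<Longrightarrow>
            (\<forall>t. is_source V A t \<longrightarrow> t = s) \<Longrightarrow> elim_depth V A 1"
| many_sources: "uconnected V A \<Longrightarrow> is_source V A s \<Longrightarrow> is_source V A t \<Longrightarrow> t \<noteq> s \<Longrightarrow>
            elim_depth (V - reach V A s) A d \<Longrightarrow> elim_depth V A (Suc d)"

definition dag_dtd :: "'a set \<Rightarrow> ('a \<times> 'a) set \<Rightarrow> nat" where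
  "dag_dtd V A = (LEAST d. elim_depth V A d)"

definition dtd :: "'a set \<Rightarrow> 'a set set \<Rightarrow> nat" where
  "dtd V E = Max {dag_dtd V A | A. acyclic_orientation V E A}"

end

theory Submission
  imports Defs
begin
definition closedp :: "'a set \<Rightarrow> ('a \<times> 'a) set \<Rightarrow> 'a set \<Rightarrow> bool" where
  "closedp V A P \<longleftrightarrow> (\<forall>a b. (a,b) \<in> restrict_arcs V A \<longrightarrow> (a \<in> P \<longleftrightarrow> b \<in> P))"

lemma restrict_mono: "W \<subseteq> V \<Longrightarrow> restrict_arcs W A \<subseteq> restrict_arcs V A"
  by (auto simp: restrict_arcs_def)

lemma restrict_sub: "W \<subseteq> V \<Longrightarrow> restrict_arcs W A = restrict_arcs V A \<inter> (W \<times> W)"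
  by (auto simp: restrict_arcs_def)

lemma closedp_sub: "closedp V A P \<Longrightarrow> W \<subseteq> V \<Longrightarrow> closedp W A P"
  using restrict_mono unfolding closedp_def by blast

lemma rt_closed:
  assumes "(x,y) \<in> R\<^sup>*" "x \<in> P" "\<forall>a b. (a,b) \<in> R \<longrightarrow> a \<in> P \<longrightarrow> b \<in> P"
  shows "y \<in> P \<and> (x,y) \<in> (R \<inter> P \<times> P)\<^sup>*"
  using assms(1)
proof (induction rule: rtrancl_induct)
  case base then show ?case using assms(2) by simp
next
  case (step y z)
  then have "z \<in> P" using assms(3) by blast
  with step show ?case by (meson IntI SigmaI rtrancl.rtrancl_into_rtrancl)
qed

lemma comp_sub: "component V A x \<subseteq> V" by (auto simp: component_def)
lemma comp_self: "x \<in> V \<Longrightarrow> x \<in> component V A x" by (auto simp: component_def)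

lemma comp_closed: "closedp V A (component V A x)"
  unfolding closedp_def component_def
proof (intro allI impI)
  fix a b assume ab: "(a,b) \<in> restrict_arcs V A"
  then have V: "a \<in> V" "b \<in> V" by (auto simp: restrict_arcs_def)
  let ?S = "restrict_arcs V A \<union> (restrict_arcs V A)\<inverse>"
  have "(a,b) \<in> ?S" "(b,a) \<in> ?S" using ab by auto
  then have "(x,a) \<in> ?S\<^sup>* \<longleftrightarrow> (x,b) \<in> ?S\<^sup>*"
    using rtrancl.rtrancl_into_rtrancl[of x a ?S b] rtrancl.rtrancl_into_rtrancl[of x b ?S a] by blast
  then show "(a \<in> {w \<in> V. (x, w) \<in> ?S\<^sup>*}) = (b \<in> {w \<in> V. (x, w) \<in> ?S\<^sup>*})"
    using V by simp
qed

lemma comp_eq: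
  assumes "y \<in> component V A x" shows "component V A y = component V A x"
proof -
  let ?S = "restrict_arcs V A \<union> (restrict_arcs V A)\<inverse>"
  have sym: "sym (?S\<^sup>*)" by (rule sym_rtrancl) (auto simp: sym_def)
  have xy: "(x,y) \<in> ?S\<^sup>*" using assms by (auto simp: component_def)
  then have yx: "(y,x) \<in> ?S\<^sup>*" using sym by (meson symD)
  have "(y,w) \<in> ?S\<^sup>* \<longleftrightarrow> (x,w) \<in> ?S\<^sup>*" for w
    using xy yx rtrancl_trans[of y x ?S w] rtrancl_trans[of x y ?S w] by blast
  then show ?thesis unfolding component_def by simp
qed

lemma comp_CC:
  assumes "closedp V A P" "P \<subseteq> V" "x \<in> P"
  shows "component P A x = component V A x"
proof
  have "(restrict_arcs P A \<union> (restrict_arcs P A)\<inverse>)\<^sup>* \<subseteq> (restrict_arcs V A \<union> (restrict_arcs V A)\<inverse>)\<^sup>*"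
    by (rule rtrancl_mono) (use restrict_mono[OF assms(2), of A] in blast)
  then show "component P A x \<subseteq> component V A x"
    unfolding component_def using assms(2) by blast
next
  let ?S = "restrict_arcs V A \<union> (restrict_arcs V A)\<inverse>"
  have eq: "?S \<inter> P \<times> P = restrict_arcs P A \<union> (restrict_arcs P A)\<inverse>"
    using assms(2) by (auto simp: restrict_arcs_def)
  have cl: "\<forall>a b. (a,b) \<in> ?S \<longrightarrow> a \<in> P \<longrightarrow> b \<in> P"
    using assms(1) unfolding closedp_def by blast
  show "component V A x \<subseteq> component P A x"
    unfolding component_def
    using rt_closed[OF _ assms(3) cl] eq by auto
qed

lemma reach_CC:
  assumes "closedp V A P" "P \<subseteq> V" "x \<in> P"
  shows "reach P A x = reach V A x"
proof
  have "(restrict_arcs P A)\<^sup>* \<subseteq> (restrict_arcs V A)\<^sup>*"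
    by (rule rtrancl_mono) (use restrict_mono[OF assms(2), of A] in blast)
  then show "reach P A x \<subseteq> reach V A x"
    unfolding reach_def using assms(2) by blast
next
  let ?S = "restrict_arcs V A"
  have eq: "?S \<inter> P \<times> P = restrict_arcs P A"
    using assms(2) by (auto simp: restrict_arcs_def)
  have cl: "\<forall>a b. (a,b) \<in> ?S \<longrightarrow> a \<in> P \<longrightarrow> b \<in> P"
    using assms(1) unfolding closedp_def by blast
  show "reach V A x \<subseteq> reach P A x"
    unfolding reach_def
    using rt_closed[OF _ assms(3) cl] eq by auto
qed

lemma reach_sub_comp: "reach V A s \<subseteq> component V A s"
proof -
  have "(restrict_arcs V A)\<^sup>* \<subseteq> (restrict_arcs V A \<union> (restrict_arcs V A)\<inverse>)\<^sup>*"
    by (rule rtrancl_mono) blast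
  then show ?thesis unfolding reach_def component_def by blast
qed

lemma reach_self: "s \<in> V \<Longrightarrow> s \<in> reach V A s"
  unfolding reach_def by auto

lemma uconn_comp:
  assumes "x \<in> V" shows "uconnected (component V A x) A"
  unfolding uconnected_def
proof (intro conjI ballI)
  show "component V A x \<noteq> {}" using comp_self[OF assms] by auto
  fix w assume w: "w \<in> component V A x"
  have "component (component V A x) A w = component V A w"
    by (rule comp_CC[OF comp_closed comp_sub w])
  also have "\<dots> = component V A x" using comp_eq[OF w] .
  finally show "component (component V A x) A w = component V A x" .
qed

lemma uconn_comps: "uconnected V A \<Longrightarrow> components V A = {V}"
  unfolding uconnected_def components_def by auto

lemma comps_finite: "finite V \<Longrightarrow> finite (components V A)"
  unfolding components_def by simp

lemma comp_depth:
  assumes "elim_depth W A e" "finite W" "x \<in> W"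
  shows "\<exists>e'\<le>e. elim_depth (component W A x) A e'"
  using assms(1)
proof cases
  case empty then show ?thesis using assms by simp
next
  case (disconn d)
  have C: "component W A x \<in> components W A" using assms(3) by (auto simp: components_def)
  then have "d (component W A x) \<le> e"
    using disconn comps_finite[OF assms(2)] by simp
  then show ?thesis using disconn C by blast
next
  case (one_source s)
  then have "component W A x = W" using assms(3) unfolding uconnected_def by blast
  then show ?thesis using assms(1) by auto
next
  case (many_sources s t d)
  then have "component W A x = W" using assms(3) unfolding uconnected_def by blast
  then show ?thesis using assms(1) by auto
qed

lemma assemble:
  assumes "finite V" "V \<noteq> {}" "\<forall>C\<in>components V A. elim_depth C A (g C)"
  shows "elim_depth V A (Max (g ` components V A))"
proof (cases "uconnected V A")
  case True
  then have "components V A = {V}" by (rule uconn_comps)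
  then show ?thesis using assms by simp
next
  case False
  then show ?thesis using assms by (intro elim_depth.disconn) auto
qed

lemma partition_depth:
  assumes "finite V" "V \<noteq> {}" "\<Union>PP = V"
    "\<forall>P\<in>PP. closedp V A P \<and> P \<subseteq> V \<and> (\<exists>e\<le>m. elim_depth P A e)"
  shows "\<exists>e\<le>m. elim_depth V A e"
proof -
  have "\<forall>K\<in>components V A. \<exists>e. e \<le> m \<and> elim_depth K A e"
  proof
    fix K assume "K \<in> components V A"
    then obtain x where x: "x \<in> V" "K = component V A x" by (auto simp: components_def)
    then obtain P where P: "P \<in> PP" "x \<in> P" using assms(3) by auto
    then obtain e where e: "e \<le> m" "elim_depth P A e" "closedp V A P" "P \<subseteq> V" using assms(4) by blast
    have "K = component P A x" using comp_CC[OF e(3,4) P(2)] x by simp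
    moreover obtain e' where "e' \<le> e" "elim_depth (component P A x) A e'"
      using comp_depth[OF e(2) finite_subset[OF e(4) assms(1)] P(2)] by blast
    ultimately show "\<exists>e. e \<le> m \<and> elim_depth K A e" using e(1) le_trans by blast
  qed
  from bchoice[OF this] obtain g where g: "\<forall>K\<in>components V A. g K \<le> m \<and> elim_depth K A (g K)" by blast
  have "elim_depth V A (Max (g ` components V A))"
    using assemble[OF assms(1,2)] g by blast
  moreover have "Max (g ` components V A) \<le> m"
  proof -
    have "components V A \<noteq> {}" using assms(2) by (simp add: components_def)
    then show ?thesis using g comps_finite[OF assms(1)] by (simp add: Max_le_iff)
  qed
  ultimately show ?thesis by blast
qed

lemma closed_sub_depth:
  assumes "elim_depth W A e" "finite W" "closedp W A U" "U \<subseteq> W"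
  shows "\<exists>e'\<le>e. elim_depth U A e'"
proof (cases "U = {}")
  case True then show ?thesis using elim_depth.empty by auto
next
  case False
  let ?PP = "{component W A x | x. x \<in> U}"
  let ?S = "restrict_arcs W A \<union> (restrict_arcs W A)\<inverse>"
  have cl: "\<forall>a b. (a,b) \<in> ?S \<longrightarrow> a \<in> U \<longrightarrow> b \<in> U"
  proof (intro allI impI)
    fix a b assume "(a,b) \<in> ?S" "a \<in> U"
    then consider "(a,b) \<in> restrict_arcs W A" | "(b,a) \<in> restrict_arcs W A" by blast
    then show "b \<in> U" using assms(3) \<open>a \<in> U\<close> unfolding closedp_def by metis
  qed
  have sub: "component W A x \<subseteq> U" if "x \<in> U" for x
  proof
    fix y assume "y \<in> component W A x"
    then have "(x,y) \<in> ?S\<^sup>*" by (simp add: component_def)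
    from rt_closed[OF this that cl] show "y \<in> U" by blast
  qed
  have un: "\<Union>?PP = U"
  proof
    show "\<Union>?PP \<subseteq> U"
    proof
      fix y assume "y \<in> \<Union>?PP"
      then obtain x where x: "x \<in> U" "y \<in> component W A x" by auto
      show "y \<in> U" using sub[OF x(1)] x(2) by (rule subsetD)
    qed
    show "U \<subseteq> \<Union>?PP"
    proof
      fix x assume x: "x \<in> U"
      then have "x \<in> W" by (rule subsetD[OF assms(4)])
      then have "x \<in> component W A x" by (rule comp_self)
      moreover have "component W A x \<in> ?PP" using x by auto
      ultimately show "x \<in> \<Union>?PP" by (rule UnionI[rotated])
    qed
  qed
  have pp: "\<forall>P\<in>?PP. closedp U A P \<and> P \<subseteq> U \<and> (\<exists>e'\<le>e. elim_depth P A e')"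
  proof
    fix P assume "P \<in> ?PP"
    then obtain x where x: "x \<in> U" "P = component W A x" by blast
    have "closedp U A P" using closedp_sub[OF comp_closed assms(4)] x by simp
    moreover have "P \<subseteq> U" using sub x by simp
    moreover have "\<exists>e'\<le>e. elim_depth P A e'" using comp_depth[OF assms(1,2)] x assms(4) by blast
    ultimately show "closedp U A P \<and> P \<subseteq> U \<and> (\<exists>e'\<le>e. elim_depth P A e')" by blast
  qed
  show ?thesis by (rule partition_depth[OF finite_subset[OF assms(4,2)] False un pp])
qed

lemma union_comps: "\<Union>(components V A) = V"
proof
  show "\<Union>(components V A) \<subseteq> V" using comp_sub[of V A] by (auto simp: components_def)
  show "V \<subseteq> \<Union>(components V A)"
  proof
    fix x assume x: "x \<in> V"
    then have "x \<in> component V A x" by (rule comp_self)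
    moreover have "component V A x \<in> components V A" using x by (simp add: components_def)
    ultimately show "x \<in> \<Union>(components V A)" by (rule UnionI[rotated])
  qed
qed

lemma closedp_eq: "closedp W A P \<Longrightarrow> P \<inter> W = Q \<inter> W \<Longrightarrow> closedp W A Q"
  unfolding closedp_def restrict_arcs_def by blast

lemma comp_disj: "y \<in> component V A x \<Longrightarrow> y \<in> component V A z \<Longrightarrow> component V A x = component V A z"
  using comp_eq by metis

lemma source_step:
  assumes "finite V" "V \<noteq> {}" "is_source V A s" "elim_depth (V - reach V A s) A e"
  shows "\<exists>e'\<le>Suc e. elim_depth V A e'"
proof -
  let ?R = "reach V A s"
  have sV: "s \<in> V" using assms(3) by (simp add: is_source_def)
  have fW: "finite (V - ?R)" using assms(1) by simp
  have "\<forall>P\<in>components V A. closedp V A P \<and> P \<subseteq> V \<and> (\<exists>e'\<le>Suc e. elim_depth P A e')"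
  proof
    fix C assume "C \<in> components V A"
    then obtain x where x: "x \<in> V" "C = component V A x" unfolding components_def by blast
    have clC: "closedp V A C" using x comp_closed by simp
    have CV: "C \<subseteq> V" using x comp_sub by simp
    have "\<exists>e'\<le>Suc e. elim_depth C A e'"
    proof (cases "s \<in> C")
      case True
      then have Cs: "C = component V A s" using comp_eq[of s V A x] x(2) by simp
      have cl1: "closedp (V - ?R) A C" using closedp_sub[OF clC, of "V - ?R"] by blast
      have cl2: "closedp (V - ?R) A (C - ?R)" by (rule closedp_eq[OF cl1]) blast
      obtain e1 where e1: "e1 \<le> e" "elim_depth (C - ?R) A e1"
        using closed_sub_depth[OF assms(4) fW cl2] CV by blast
      have rC: "reach C A s = ?R" using reach_CC[OF clC CV True] .
      have uC: "uconnected C A" using Cs uconn_comp sV by simp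
      have sC: "is_source C A s" using assms(3) True restrict_mono[OF CV, of A]
        unfolding is_source_def by blast
      show ?thesis
      proof (cases "\<exists>t. is_source C A t \<and> t \<noteq> s")
        case True
        then obtain t where t: "is_source C A t" "t \<noteq> s" by blast
        have "elim_depth C A (Suc e1)"
          by (rule elim_depth.many_sources[OF uC sC t(1) t(2)]) (simp add: rC e1(2))
        then show ?thesis using e1(1) by (intro exI[of _ "Suc e1"]) simp
      next
        case False
        then have "\<forall>t. is_source C A t \<longrightarrow> t = s" by blast
        then have "elim_depth C A 1" by (rule elim_depth.one_source[OF uC sC])
        then show ?thesis by (intro exI[of _ 1]) simp
      qed
    next
      case False
      have disj: "y \<notin> component V A s" if "y \<in> C" for y
      proof
        assume "y \<in> component V A s"
        then have "component V A s = C" using comp_disj[of y V A s x] that x(2) by simp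
        then show False using comp_self[OF sV, of A] False by simp
      qed
      have sub: "C \<subseteq> V - ?R" using disj reach_sub_comp[of V A s] CV by blast
      have cl1: "closedp (V - ?R) A C" using closedp_sub[OF clC, of "V - ?R"] by blast
      obtain e1 where "e1 \<le> e" "elim_depth C A e1"
        using closed_sub_depth[OF assms(4) fW cl1 sub] by blast
      then show ?thesis by (intro exI[of _ e1]) simp
    qed
    then show "closedp V A C \<and> C \<subseteq> V \<and> (\<exists>e'\<le>Suc e. elim_depth C A e')" using clC CV by blast
  qed
  then show ?thesis by (rule partition_depth[OF assms(1,2) union_comps[of V A]])
qed

lemma exists_source_reach:
  assumes "finite V" "acyclic A" "y \<in> V"
  shows "\<exists>s. is_source V A s \<and> y \<in> reach V A s"
proof -
  let ?r = "restrict_arcs V A"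
  have fin: "finite ?r"
    by (rule finite_subset[of _ "V \<times> V"]) (auto simp: restrict_arcs_def assms(1))
  have "acyclic ?r" by (rule acyclic_subset[OF assms(2)]) (auto simp: restrict_arcs_def)
  then have wf: "wf ?r" using finite_acyclic_wf fin by blast
  show ?thesis using wf assms(3)
  proof (induction y rule: wf_induct_rule)
    case (less y)
    show ?case
    proof (cases "\<exists>z. (z,y) \<in> ?r")
      case True
      then obtain z where z: "(z,y) \<in> ?r" by blast
      then have "z \<in> V" by (simp add: restrict_arcs_def)
      from less.IH[OF z this] obtain s where s: "is_source V A s" "z \<in> reach V A s" by blast
      then have "(s,z) \<in> ?r\<^sup>*" by (simp add: reach_def)
      then have "(s,y) \<in> ?r\<^sup>*" using z by (rule rtrancl.rtrancl_into_rtrancl)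
      then have "y \<in> reach V A s" using less.prems by (simp add: reach_def)
      then show ?thesis using s(1) by blast
    next
      case False
      then have "is_source V A y" using less.prems by (simp add: is_source_def)
      then show ?thesis using reach_self[OF less.prems] by blast
    qed
  qed
qed

lemma exists_sink:
  assumes "finite S" "S \<noteq> {}" "acyclic A"
  shows "\<exists>x\<in>S. \<forall>y\<in>S. (x,y) \<notin> A"
proof -
  let ?r = "(A \<inter> S \<times> S)\<inverse>"
  have fin: "finite ?r" using assms(1) by (auto intro: finite_subset[of _ "S \<times> S"])
  have "acyclic ?r" using acyclic_subset[OF assms(3)] by (simp add: Int_lower1)
  then have wf: "wf ?r" using finite_acyclic_wf fin by blast
  obtain x0 where "x0 \<in> S" using assms(2) by blast
  then obtain z where z: "z \<in> S" "\<forall>y. (y,z) \<in> ?r \<longrightarrow> y \<notin> S"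
    using wf unfolding wf_eq_minimal by blast
  then show ?thesis by blast
qed

lemma elim_exists:
  assumes "finite V" "acyclic A"
  shows "\<exists>d. elim_depth V A d"
  using assms(1)
proof (induction V rule: finite_psubset_induct)
  case (psubset V)
  show ?case
  proof (cases "V = {}")
    case True then show ?thesis using elim_depth.empty by auto
  next
    case ne: False
    show ?thesis
    proof (cases "uconnected V A")
      case uc: True
      obtain y where "y \<in> V" using ne by auto
      then obtain s where s: "is_source V A s"
        using exists_source_reach[OF psubset.hyps(1) assms(2)] by blast
      show ?thesis
      proof (cases "\<exists>t. is_source V A t \<and> t \<noteq> s")
        case True
        then obtain t where t: "is_source V A t" "t \<noteq> s" by blast
        have "s \<in> reach V A s" using s reach_self[of s V A] by (simp add: is_source_def)
        then have "V - reach V A s \<subset> V" using s by (auto simp: is_source_def)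
        then obtain d where "elim_depth (V - reach V A s) A d" using psubset.IH by blast
        then show ?thesis using elim_depth.many_sources[OF uc s t(1) t(2)] by blast
      next
        case False then show ?thesis using elim_depth.one_source[OF uc s] by blast
      qed
    next
      case nc: False
      have "\<forall>C\<in>components V A. \<exists>d. elim_depth C A d"
      proof
        fix C assume C: "C \<in> components V A"
        then obtain x where x: "x \<in> V" "C = component V A x" unfolding components_def by blast
        have "C \<noteq> V"
        proof
          assume CV: "C = V"
          have "uconnected V A" unfolding uconnected_def
          proof (intro conjI ballI)
            show "V \<noteq> {}" by (rule ne)
            fix v assume "v \<in> V"
            then have "v \<in> component V A x" using CV x by simp
            then show "component V A v = V" using comp_eq CV x by metis
          qed
          then show False using nc by simp
        qed
        then have "C \<subset> V" using comp_sub[of V A x] x by blast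
        then show "\<exists>d. elim_depth C A d" using psubset.IH by blast
      qed
      from bchoice[OF this] obtain g where "\<forall>C\<in>components V A. elim_depth C A (g C)" by blast
      then show ?thesis using elim_depth.disconn[OF ne nc] by blast
    qed
  qed
qed

lemma restrict_eq_defs:
  assumes "restrict_arcs V A = restrict_arcs V B"
  shows "is_source V A = is_source V B" "reach V A = reach V B"
    "component V A = component V B" "components V A = components V B"
    "uconnected V A = uconnected V B"
proof -
  show 1: "is_source V A = is_source V B" by (rule ext) (simp add: is_source_def assms)
  show "reach V A = reach V B" by (rule ext) (simp add: reach_def assms)
  show 2: "component V A = component V B" by (rule ext) (simp add: component_def assms)
  show "components V A = components V B" by (simp add: components_def 2)
  show "uconnected V A = uconnected V B" by (simp add: uconnected_def 2)
qed

lemma elim_cong: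
  "elim_depth V A d \<Longrightarrow> restrict_arcs V A = restrict_arcs V B \<Longrightarrow> elim_depth V B d"
proof (induction rule: elim_depth.induct)
  case (empty A)
  show ?case by (rule elim_depth.empty)
next
  case (disconn V A d)
  note eqs = restrict_eq_defs[OF disconn.prems]
  have all: "\<forall>C\<in>components V B. elim_depth C B (d C)"
  proof
    fix C assume C: "C \<in> components V B"
    then have CA: "C \<in> components V A" using eqs(4) by simp
    obtain x where "C = component V B x" using C unfolding components_def by blast
    then have "C \<subseteq> V" using comp_sub[of V B x] by simp
    then have "restrict_arcs C A = restrict_arcs C B"
      using disconn.prems by (simp add: restrict_sub)
    moreover have "elim_depth C A (d C) \<and> (restrict_arcs C A = restrict_arcs C B \<longrightarrow> elim_depth C B (d C))"
      using disconn.IH CA by (rule bspec)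
    ultimately show "elim_depth C B (d C)" by simp
  qed
  have h2: "\<not> uconnected V B" using disconn.hyps(2) eqs(5) by simp
  have "elim_depth V B (Max (d ` components V B))"
    by (rule elim_depth.disconn[OF disconn.hyps(1) h2 all])
  then show ?case using eqs(4) by simp
next
  case (one_source V A s)
  note eqs = restrict_eq_defs[OF one_source.prems]
  note h = one_source.hyps[unfolded eqs]
  show ?case by (rule elim_depth.one_source[OF h])
next
  case (many_sources V A s t d)
  note eqs = restrict_eq_defs[OF many_sources.prems]
  have "restrict_arcs (V - reach V A s) A = restrict_arcs (V - reach V A s) B"
    using many_sources.prems by (simp add: restrict_sub[of "V - reach V A s" V])
  then have "elim_depth (V - reach V A s) B d" by (rule many_sources.IH)
  then have h5: "elim_depth (V - reach V B s) B d" using eqs(2) by simp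
  note h = many_sources.hyps(1-4)[unfolded eqs]
  show ?case by (rule elim_depth.many_sources[OF h h5])
qed

lemma reach_sink:
  assumes "\<forall>y. (x,y) \<notin> restrict_arcs V A" "s \<in> V" "s \<noteq> x"
  shows "reach (V - {x}) A s = reach V A s - {x}"
proof
  have "(restrict_arcs (V - {x}) A)\<^sup>* \<subseteq> (restrict_arcs V A)\<^sup>*"
    by (rule rtrancl_mono) (rule restrict_mono, blast)
  then show "reach (V - {x}) A s \<subseteq> reach V A s - {x}"
    unfolding reach_def by blast
next
  have "(s,y) \<in> (restrict_arcs V A)\<^sup>* \<Longrightarrow> y \<noteq> x \<Longrightarrow> (s,y) \<in> (restrict_arcs (V - {x}) A)\<^sup>*" for y
  proof (induction rule: rtrancl_induct)
    case base then show ?case by simp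
  next
    case (step y z)
    have yx: "y \<noteq> x" using step.hyps(2) assms(1) by blast
    have "(y,z) \<in> restrict_arcs (V - {x}) A"
      using step.hyps(2) yx step.prems by (auto simp: restrict_arcs_def)
    then show ?case using step.IH[OF yx] by (rule rtrancl.rtrancl_into_rtrancl[rotated])
  qed
  then show "reach V A s - {x} \<subseteq> reach (V - {x}) A s"
    unfolding reach_def by blast
qed

lemma isolated_comp:
  assumes "is_source V A x" "\<forall>y. (x,y) \<notin> restrict_arcs V A"
  shows "component V A x = {x}"
proof
  let ?S = "restrict_arcs V A \<union> (restrict_arcs V A)\<inverse>"
  show "component V A x \<subseteq> {x}"
  proof
    fix w assume "w \<in> component V A x"
    then have "(x,w) \<in> ?S\<^sup>*" by (simp add: component_def)
    then show "w \<in> {x}"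
    proof (cases rule: converse_rtranclE)
      case base then show ?thesis by simp
    next
      case (step m)
      then show ?thesis using assms unfolding is_source_def by blast
    qed
  qed
  show "{x} \<subseteq> component V A x" using comp_self assms(1) by (simp add: is_source_def comp_self)
qed

lemma sink_delete:
  "elim_depth V A d' \<Longrightarrow> finite V \<Longrightarrow> acyclic A \<Longrightarrow> x \<in> V \<Longrightarrow> (\<forall>y. (x,y) \<notin> restrict_arcs V A)
   \<Longrightarrow> \<exists>d\<le>d'. elim_depth (V - {x}) A d"
proof (induction arbitrary: x rule: elim_depth.induct)
  case (empty A)
  then show ?case by simp
next
  case (disconn V A d)
  let ?W = "V - {x}"
  let ?m = "Max (d ` components V A)"
  let ?Cx = "component V A x"
  have finc: "finite (components V A)" by (rule comps_finite[OF disconn.prems(1)])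
  have dle: "d C \<le> ?m" if "C \<in> components V A" for C using finc that by simp
  have Cx: "?Cx \<in> components V A" using disconn.prems(3) unfolding components_def by blast
  show ?case
  proof (cases "?W = {}")
    case True show ?thesis by (rule exI[of _ 0]) (simp only: True elim_depth.empty le0 conj_absorb simp_thms)
  next
    case False
    define PP where "PP = insert (?Cx - {x}) {C \<in> components V A. x \<notin> C}"
    have un: "\<Union>PP = ?W"
    proof
      show "\<Union>PP \<subseteq> ?W"
      proof
        fix y assume "y \<in> \<Union>PP"
        then obtain P where P: "P \<in> PP" "y \<in> P" by blast
        then consider "P = ?Cx - {x}" | "P \<in> components V A" "x \<notin> P" unfolding PP_def by blast
        then show "y \<in> ?W"
        proof cases
          case 1 then show ?thesis using P(2) comp_sub[of V A x] by blast
        next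
          case 2
          then obtain z where "P = component V A z" unfolding components_def by blast
          then show ?thesis using P(2) 2(2) comp_sub[of V A z] by blast
        qed
      qed
      show "?W \<subseteq> \<Union>PP"
      proof
        fix y assume y: "y \<in> ?W"
        let ?Cy = "component V A y"
        have yCy: "y \<in> ?Cy" using y comp_self[of y V A] by blast
        show "y \<in> \<Union>PP"
        proof (cases "x \<in> ?Cy")
          case True
          then have "?Cx = ?Cy" by (rule comp_eq)
          then have "y \<in> ?Cx - {x}" using yCy y by simp
          moreover have "?Cx - {x} \<in> PP" unfolding PP_def by simp
          ultimately show ?thesis by (rule UnionI[rotated])
        next
          case False
          have "?Cy \<in> components V A" using y unfolding components_def by blast
          then have "?Cy \<in> PP" using False unfolding PP_def by simp
          with yCy show ?thesis by (rule UnionI[rotated])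
        qed
      qed
    qed
    have pp: "\<forall>P\<in>PP. closedp ?W A P \<and> P \<subseteq> ?W \<and> (\<exists>e\<le>?m. elim_depth P A e)"
    proof
      fix P assume "P \<in> PP"
      then consider "P = ?Cx - {x}" | "P \<in> components V A" "x \<notin> P" unfolding PP_def by blast
      then show "closedp ?W A P \<and> P \<subseteq> ?W \<and> (\<exists>e\<le>?m. elim_depth P A e)"
      proof cases
        case 1
        have cl0: "closedp ?W A ?Cx" by (rule closedp_sub[OF comp_closed]) blast
        have cl: "closedp ?W A (?Cx - {x})" by (rule closedp_eq[OF cl0]) blast
        have sub: "?Cx - {x} \<subseteq> ?W" using comp_sub[of V A x] by blast
        note ih = bspec[OF disconn.IH Cx, THEN conjunct2]
        have finCx: "finite ?Cx" using comp_sub[of V A x] disconn.prems(1) by (rule finite_subset)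
        have xCx: "x \<in> ?Cx" using disconn.prems(3) by (rule comp_self)
        have sinkCx: "\<forall>y. (x,y) \<notin> restrict_arcs ?Cx A"
          using disconn.prems(4) restrict_mono[OF comp_sub[of V A x], of A] by blast
        obtain e where e: "e \<le> d ?Cx" "elim_depth (?Cx - {x}) A e"
          using ih finCx disconn.prems(2) xCx sinkCx by blast
        have "e \<le> ?m" using e(1) dle[OF Cx] by simp
        then show ?thesis using 1 cl sub e(2) by blast
      next
        case 2
        have cl: "closedp ?W A P" using 2(1) closedp_sub[OF comp_closed, of ?W V A]
          unfolding components_def by blast
        have sub: "P \<subseteq> ?W" using 2 comp_sub[of V A] unfolding components_def by blast
        have "elim_depth P A (d P)" using disconn.IH 2(1) by blast
        then show ?thesis using cl sub dle[OF 2(1)] by blast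
      qed
    qed
    have finW: "finite ?W" using disconn.prems(1) by simp
    show ?thesis by (rule partition_depth[OF finW False un pp])
  qed
next
  case (one_source V A s)
  let ?W = "V - {x}"
  have finW: "finite ?W" using one_source.prems(1) by simp
  show ?case
  proof (cases "?W = {}")
    case True show ?thesis by (rule exI[of _ 0]) (simp only: True elim_depth.empty le0 conj_absorb simp_thms)
  next
    case False
    have src: "is_source V A s1" if s1: "is_source ?W A s1" for s1
      unfolding is_source_def
    proof (intro conjI allI)
      show "s1 \<in> V" using s1 by (simp add: is_source_def)
      fix u show "(u, s1) \<notin> restrict_arcs V A"
      proof
        assume u: "(u, s1) \<in> restrict_arcs V A"
        then have "u \<noteq> x" using one_source.prems(4) by blast
        then have "(u, s1) \<in> restrict_arcs ?W A" using u s1 by (auto simp: restrict_arcs_def is_source_def)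
        then show False using s1 by (simp add: is_source_def)
      qed
    qed
    have allr: "y \<in> reach ?W A s \<and> is_source ?W A s" if y: "y \<in> ?W" for y
    proof -
      obtain s1 where s1: "is_source ?W A s1" "y \<in> reach ?W A s1"
        using exists_source_reach[OF finW one_source.prems(2) y] by blast
      have "s1 = s" using one_source.hyps(3) src[OF s1(1)] by blast
      then show ?thesis using s1 by simp
    qed
    obtain y where "y \<in> ?W" using False by blast
    then have sW: "is_source ?W A s" using allr by blast
    have "?W - reach ?W A s = {}" using allr by blast
    then have "elim_depth (?W - reach ?W A s) A 0" by (simp only: elim_depth.empty)
    from source_step[OF finW False sW this] show ?thesis by simp
  qed
next
  case (many_sources V A s t d)
  let ?W = "V - {x}"
  let ?R = "reach V A s"
  have finW: "finite ?W" using many_sources.prems(1) by simp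
  have sx: "s \<noteq> x"
  proof
    assume sx: "s = x"
    have "component V A x = {x}"
      using isolated_comp[of V A x] many_sources.hyps(2) many_sources.prems(4) sx by simp
    moreover have "component V A x = V"
      using many_sources.hyps(1) many_sources.prems(3) unfolding uconnected_def by blast
    moreover have "t \<in> V" using many_sources.hyps(3) by (simp add: is_source_def)
    ultimately show False using many_sources.hyps(4) sx by blast
  qed
  have sV: "s \<in> V" using many_sources.hyps(2) by (simp add: is_source_def)
  have sW: "is_source ?W A s"
    using many_sources.hyps(2) sx restrict_mono[of ?W V A] unfolding is_source_def by blast
  have Wne: "?W \<noteq> {}" using sV sx by blast
  have rs: "reach ?W A s = ?R - {x}"
    by (rule reach_sink[OF many_sources.prems(4) sV sx])
  show ?case
  proof (cases "x \<in> ?R")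
    case True
    then have "?W - reach ?W A s = V - ?R" using rs by blast
    then have "elim_depth (?W - reach ?W A s) A d" using many_sources.hyps(5) by simp
    from source_step[OF finW Wne sW this] show ?thesis by simp
  next
    case False
    have eq: "?W - reach ?W A s = (V - ?R) - {x}" using rs False by blast
    have sink2: "\<forall>y. (x,y) \<notin> restrict_arcs (V - ?R) A"
      using many_sources.prems(4) restrict_mono[of "V - ?R" V A] by blast
    obtain e where e: "e \<le> d" "elim_depth ((V - ?R) - {x}) A e"
      using many_sources.IH[of x] many_sources.prems(1,2,3) False sink2 by blast
    then have "elim_depth (?W - reach ?W A s) A e" using eq by simp
    from source_step[OF finW Wne sW this] obtain e' where "e' \<le> Suc e" "elim_depth ?W A e'" by blast
    then show ?thesis using e(1) by (intro exI[of _ e']) simp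
  qed
qed

lemma down_delete:
  assumes "finite W" "acyclic A"
  shows "elim_depth W A d \<Longrightarrow> X \<subseteq> W \<Longrightarrow> (\<forall>a b. (a,b) \<in> A \<longrightarrow> a \<in> W \<longrightarrow> a \<notin> X \<longrightarrow> b \<in> X \<longrightarrow> False)
    \<Longrightarrow> \<exists>e\<le>d. elim_depth X A e"
  using assms(1)
proof (induction W arbitrary: d rule: finite_psubset_induct)
  case (psubset W)
  show ?case
  proof (cases "W - X = {}")
    case True
    then have "X = W" using psubset.prems(2) by blast
    then show ?thesis using psubset.prems(1) by blast
  next
    case False
    have finWX: "finite (W - X)" using psubset.hyps(1) by simp
    obtain x where x: "x \<in> W - X" "\<forall>y\<in>W - X. (x,y) \<notin> A"
      using exists_sink[OF finWX False assms(2)] by blast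
    have sink: "\<forall>y. (x,y) \<notin> restrict_arcs W A"
    proof (intro allI notI)
      fix y assume xy: "(x,y) \<in> restrict_arcs W A"
      then have y: "y \<in> W" "(x,y) \<in> A" by (auto simp: restrict_arcs_def)
      show False
      proof (cases "y \<in> X")
        case True then show False using psubset.prems(3) y(2) x(1) by blast
      next
        case False then show False using x(2) y by blast
      qed
    qed
    have xW: "x \<in> W" using x(1) by blast
    obtain e1 where e1: "e1 \<le> d" "elim_depth (W - {x}) A e1"
      using sink_delete[OF psubset.prems(1) psubset.hyps(1) assms(2) xW sink] by blast
    have ps: "W - {x} \<subset> W" using xW by blast
    have sub: "X \<subseteq> W - {x}" using psubset.prems(2) x(1) by blast
    have down: "\<forall>a b. (a,b) \<in> A \<longrightarrow> a \<in> W - {x} \<longrightarrow> a \<notin> X \<longrightarrow> b \<in> X \<longrightarrow> False"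
      using psubset.prems(3) by blast
    obtain e where "e \<le> e1" "elim_depth X A e"
      using psubset.IH[OF ps e1(2) sub down] by blast
    then show ?thesis using e1(1) by (intro exI[of _ e]) simp
  qed
qed

definition fmap :: "'a \<Rightarrow> 'a \<Rightarrow> 'a \<Rightarrow> 'a" where
  "fmap u v x = (if x = v then u else x)"

definition cimg :: "'a \<Rightarrow> 'a \<Rightarrow> ('a \<times> 'a) set \<Rightarrow> ('a \<times> 'a) set" where
  "cimg u v A = {(fmap u v a, fmap u v b) | a b. (a,b) \<in> A \<and> fmap u v a \<noteq> fmap u v b}"

lemma fmap_neq: "u \<noteq> v \<Longrightarrow> fmap u v x \<noteq> v"
  by (simp add: fmap_def)

lemma fmap_id: "x \<noteq> v \<Longrightarrow> fmap u v x = x"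
  by (simp add: fmap_def)

lemma fmap_v: "fmap u v v = u"
  by (simp add: fmap_def)

lemma fmap_in: "x \<in> W \<Longrightarrow> u \<in> W \<Longrightarrow> fmap u v x \<in> W"
  by (simp add: fmap_def)

lemma fmap_eq_cases: "fmap u v a = p \<Longrightarrow> (a = p \<and> a \<noteq> v) \<or> (a = v \<and> p = u)"
  by (auto simp: fmap_def)

lemma restrict_cimg:
  assumes "u \<in> W" "v \<in> W" "u \<noteq> v"
  shows "(p,q) \<in> restrict_arcs (W - {v}) (cimg u v A) \<longleftrightarrow>
    (\<exists>a b. (a,b) \<in> restrict_arcs W A \<and> p = fmap u v a \<and> q = fmap u v b \<and> p \<noteq> q)"
proof
  assume "(p,q) \<in> restrict_arcs (W - {v}) (cimg u v A)"
  then obtain a b where ab: "(a,b) \<in> A" "p = fmap u v a" "q = fmap u v b" "p \<noteq> q" "p \<in> W" "q \<in> W"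
    unfolding restrict_arcs_def cimg_def by blast
  have "a \<in> W" using fmap_eq_cases[OF ab(2)[symmetric]] ab(5) assms(2) by blast
  moreover have "b \<in> W" using fmap_eq_cases[OF ab(3)[symmetric]] ab(6) assms(2) by blast
  ultimately show "\<exists>a b. (a,b) \<in> restrict_arcs W A \<and> p = fmap u v a \<and> q = fmap u v b \<and> p \<noteq> q"
    using ab unfolding restrict_arcs_def by blast
next
  assume "\<exists>a b. (a,b) \<in> restrict_arcs W A \<and> p = fmap u v a \<and> q = fmap u v b \<and> p \<noteq> q"
  then obtain a b where ab: "(a,b) \<in> A" "a \<in> W" "b \<in> W" "p = fmap u v a" "q = fmap u v b" "p \<noteq> q"
    unfolding restrict_arcs_def by blast
  have "p \<in> W - {v}" using ab(2,4) fmap_in[OF ab(2) assms(1)] fmap_neq[OF assms(3)] by simp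
  moreover have "q \<in> W - {v}" using ab(3,5) fmap_in[OF ab(3) assms(1)] fmap_neq[OF assms(3)] by simp
  moreover have "(p,q) \<in> cimg u v A" using ab unfolding cimg_def by blast
  ultimately show "(p,q) \<in> restrict_arcs (W - {v}) (cimg u v A)" unfolding restrict_arcs_def by blast
qed

lemma arc_map:
  assumes "u \<in> W" "v \<in> W" "u \<noteq> v" "(a,b) \<in> restrict_arcs W A"
  shows "(fmap u v a, fmap u v b) \<in> (restrict_arcs (W - {v}) (cimg u v A))\<^sup>="
proof (cases "fmap u v a = fmap u v b")
  case True then show ?thesis by simp
next
  case False
  then have "(fmap u v a, fmap u v b) \<in> restrict_arcs (W - {v}) (cimg u v A)"
    using restrict_cimg[OF assms(1-3)] assms(4) by blast
  then show ?thesis by simp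
qed

lemma path_map:
  assumes "u \<in> W" "v \<in> W" "u \<noteq> v"
  shows "(a,b) \<in> (restrict_arcs W A)\<^sup>* \<Longrightarrow> (fmap u v a, fmap u v b) \<in> (restrict_arcs (W - {v}) (cimg u v A))\<^sup>*"
proof (induction rule: rtrancl_induct)
  case base then show ?case by simp
next
  case (step b c)
  have "(fmap u v b, fmap u v c) \<in> (restrict_arcs (W - {v}) (cimg u v A))\<^sup>="
    by (rule arc_map[OF assms step.hyps(2)])
  then show ?case using step.IH by (auto intro: rtrancl.rtrancl_into_rtrancl)
qed

lemma restrict_same:
  assumes "u \<notin> X" "v \<notin> X" "acyclic A"
  shows "restrict_arcs X A = restrict_arcs X (cimg u v A)"
proof
  show "restrict_arcs X A \<subseteq> restrict_arcs X (cimg u v A)"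
  proof
    fix p assume "p \<in> restrict_arcs X A"
    then obtain a b where ab: "p = (a,b)" "(a,b) \<in> A" "a \<in> X" "b \<in> X" unfolding restrict_arcs_def by blast
    have "a \<noteq> b" using ab(2) assms(3) unfolding acyclic_def by blast
    moreover have "fmap u v a = a" "fmap u v b = b" using ab assms by (auto simp: fmap_def)
    ultimately have "(a,b) \<in> cimg u v A" using ab(2) unfolding cimg_def by force
    then show "p \<in> restrict_arcs X (cimg u v A)" using ab by (simp add: restrict_arcs_def)
  qed
  show "restrict_arcs X (cimg u v A) \<subseteq> restrict_arcs X A"
  proof
    fix p assume "p \<in> restrict_arcs X (cimg u v A)"
    then obtain a b where ab: "p = (fmap u v a, fmap u v b)" "(a,b) \<in> A" "fmap u v a \<in> X" "fmap u v b \<in> X"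
      unfolding restrict_arcs_def cimg_def by blast
    have "a \<noteq> v" using ab(3) assms(1) by (auto simp: fmap_def)
    moreover have "b \<noteq> v" using ab(4) assms(1) by (auto simp: fmap_def)
    ultimately show "p \<in> restrict_arcs X A" using ab by (simp add: fmap_def restrict_arcs_def)
  qed
qed

lemma source_cimg:
  assumes "u \<in> W" "v \<in> W" "u \<noteq> v" "is_source W A s" "s \<noteq> u" "s \<noteq> v"
  shows "is_source (W - {v}) (cimg u v A) s"
  unfolding is_source_def
proof (intro conjI allI notI)
  show "s \<in> W - {v}" using assms(4,6) by (simp add: is_source_def)
  fix p assume "(p, s) \<in> restrict_arcs (W - {v}) (cimg u v A)"
  then obtain a b where ab: "(a,b) \<in> restrict_arcs W A" "p = fmap u v a" "s = fmap u v b"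
    using restrict_cimg[OF assms(1-3)] by blast
  have "b = s" using fmap_eq_cases[OF ab(3)[symmetric]] assms(5) by blast
  then show False using ab(1) assms(4) by (simp add: is_source_def)
qed

lemma reach_cimg:
  assumes "u \<in> W" "v \<in> W" "u \<noteq> v" "s \<in> W" "s \<noteq> v" "v \<notin> reach W A s" "(u,v) \<in> A"
  shows "reach (W - {v}) (cimg u v A) s = reach W A s"
proof
  have uR: "u \<notin> reach W A s"
  proof
    assume "u \<in> reach W A s"
    then have "(s,u) \<in> (restrict_arcs W A)\<^sup>*" by (simp add: reach_def)
    moreover have "(u,v) \<in> restrict_arcs W A" using assms(1,2,7) by (simp add: restrict_arcs_def)
    ultimately have "(s,v) \<in> (restrict_arcs W A)\<^sup>*" by (rule rtrancl.rtrancl_into_rtrancl)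
    then show False using assms(2,6) by (simp add: reach_def)
  qed
  show "reach W A s \<subseteq> reach (W - {v}) (cimg u v A) s"
  proof
    fix z assume z: "z \<in> reach W A s"
    then have zv: "z \<noteq> v" using assms(6) by blast
    have "(s,z) \<in> (restrict_arcs W A)\<^sup>*" using z by (simp add: reach_def)
    from path_map[OF assms(1-3) this] have "(s,z) \<in> (restrict_arcs (W - {v}) (cimg u v A))\<^sup>*"
      using zv assms(5) by (simp add: fmap_id)
    then show "z \<in> reach (W - {v}) (cimg u v A) s" using z zv by (simp add: reach_def)
  qed
  have "(s,q) \<in> (restrict_arcs (W - {v}) (cimg u v A))\<^sup>* \<Longrightarrow> q \<in> reach W A s" for q
  proof (induction rule: rtrancl_induct)
    case base then show ?case using reach_self[OF assms(4)] .
  next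
    case (step p q)
    obtain a b where ab: "(a,b) \<in> restrict_arcs W A" "p = fmap u v a" "q = fmap u v b"
      using step.hyps(2) restrict_cimg[OF assms(1-3)] by blast
    have pu: "p \<noteq> u" using step.IH uR by blast
    have "a = p" using fmap_eq_cases[OF ab(2)[symmetric]] pu by blast
    then have "(s,b) \<in> (restrict_arcs W A)\<^sup>*"
      using step.IH ab(1) by (auto simp: reach_def intro: rtrancl.rtrancl_into_rtrancl)
    then have bR: "b \<in> reach W A s" using ab(1) by (auto simp: reach_def restrict_arcs_def)
    then have "b \<noteq> v" using assms(6) by blast
    then show ?case using bR ab(3) by (simp add: fmap_id)
  qed
  then show "reach (W - {v}) (cimg u v A) s \<subseteq> reach W A s"
    unfolding reach_def[of "W - {v}"] by blast
qed

lemma closed_cimg: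
  assumes "u \<in> W" "v \<in> W" "u \<noteq> v" "closedp W A P" "\<forall>x\<in>W. fmap u v x \<in> Q \<longleftrightarrow> x \<in> P"
  shows "closedp (W - {v}) (cimg u v A) Q"
  unfolding closedp_def
proof (intro allI impI)
  fix p q assume "(p,q) \<in> restrict_arcs (W - {v}) (cimg u v A)"
  then obtain a b where ab: "(a,b) \<in> restrict_arcs W A" "p = fmap u v a" "q = fmap u v b"
    using restrict_cimg[OF assms(1-3)] by blast
  have "a \<in> W" "b \<in> W" using ab(1) by (auto simp: restrict_arcs_def)
  then show "(p \<in> Q) = (q \<in> Q)" using assms(4,5) ab unfolding closedp_def by metis
qed

lemma contract_depth:
  "elim_depth W A d' \<Longrightarrow> acyclic A \<Longrightarrow> acyclic (cimg u v A) \<Longrightarrow> (u,v) \<in> A \<Longrightarrow> u \<noteq> v \<Longrightarrow>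
   finite W \<Longrightarrow> u \<in> W \<Longrightarrow> v \<in> W \<Longrightarrow> \<exists>d\<le>d'. elim_depth (W - {v}) (cimg u v A) d"
proof (induction rule: elim_depth.induct)
  case (empty A)
  then show ?case by simp
next
  case (disconn W A d)
  let ?V = "W - {v}"
  let ?B = "cimg u v A"
  let ?m = "Max (d ` components W A)"
  let ?Cu = "component W A u"
  have finc: "finite (components W A)" by (rule comps_finite[OF disconn.prems(5)])
  have dle: "d C \<le> ?m" if "C \<in> components W A" for C using finc that by simp
  have Cu: "?Cu \<in> components W A" using disconn.prems(6) unfolding components_def by blast
  have uCu: "u \<in> ?Cu" using disconn.prems(6) by (rule comp_self)
  have vCu: "v \<in> ?Cu"
  proof -
    have "(u,v) \<in> restrict_arcs W A" using disconn.prems(3,6,7) by (simp add: restrict_arcs_def)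
    then have "(u,v) \<in> (restrict_arcs W A \<union> (restrict_arcs W A)\<inverse>)\<^sup>*" by blast
    then show ?thesis using disconn.prems(7) by (simp add: component_def)
  qed
  have vC: "v \<notin> C" if CC: "C \<in> components W A" "u \<notin> C" for C
  proof
    assume vC: "v \<in> C"
    obtain z where z: "C = component W A z" using CC(1) unfolding components_def by blast
    have "component W A v = C" using comp_eq[of v W A z] vC z by simp
    moreover have "component W A v = ?Cu" using comp_eq[OF vCu] .
    ultimately show False using uCu CC(2) by simp
  qed
  define PP where "PP = insert (?Cu - {v}) {C \<in> components W A. u \<notin> C}"
  have un: "\<Union>PP = ?V"
  proof
    show "\<Union>PP \<subseteq> ?V"
    proof
      fix y assume "y \<in> \<Union>PP"
      then obtain P where P: "P \<in> PP" "y \<in> P" by blast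
      then consider "P = ?Cu - {v}" | "P \<in> components W A" "u \<notin> P" unfolding PP_def by blast
      then show "y \<in> ?V"
      proof cases
        case 1 then show ?thesis using P(2) comp_sub[of W A u] by blast
      next
        case 2
        then obtain z where "P = component W A z" unfolding components_def by blast
        then show ?thesis using P(2) vC[OF 2] comp_sub[of W A z] by blast
      qed
    qed
    show "?V \<subseteq> \<Union>PP"
    proof
      fix y assume y: "y \<in> ?V"
      let ?Cy = "component W A y"
      have yCy: "y \<in> ?Cy" using y comp_self[of y W A] by blast
      show "y \<in> \<Union>PP"
      proof (cases "u \<in> ?Cy")
        case True
        then have "?Cu = ?Cy" by (rule comp_eq)
        then have "y \<in> ?Cu - {v}" using yCy y by simp
        moreover have "?Cu - {v} \<in> PP" unfolding PP_def by simp
        ultimately show ?thesis by (rule UnionI[rotated])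
      next
        case False
        have "?Cy \<in> components W A" using y unfolding components_def by blast
        then have "?Cy \<in> PP" using False unfolding PP_def by simp
        with yCy show ?thesis by (rule UnionI[rotated])
      qed
    qed
  qed
  have pp: "\<forall>P\<in>PP. closedp ?V ?B P \<and> P \<subseteq> ?V \<and> (\<exists>e\<le>?m. elim_depth P ?B e)"
  proof
    fix P assume "P \<in> PP"
    then consider "P = ?Cu - {v}" | "P \<in> components W A" "u \<notin> P" unfolding PP_def by blast
    then show "closedp ?V ?B P \<and> P \<subseteq> ?V \<and> (\<exists>e\<le>?m. elim_depth P ?B e)"
    proof cases
      case 1
      have eqv: "\<forall>x\<in>W. fmap u v x \<in> ?Cu - {v} \<longleftrightarrow> x \<in> ?Cu"
        using uCu vCu disconn.prems(4) by (auto simp: fmap_def)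
      have cl: "closedp ?V ?B (?Cu - {v})"
        by (rule closed_cimg[OF disconn.prems(6,7,4) comp_closed eqv])
      have sub: "?Cu - {v} \<subseteq> ?V" using comp_sub[of W A u] by blast
      note ih = bspec[OF disconn.IH Cu, THEN conjunct2]
      have finCu: "finite ?Cu" using comp_sub[of W A u] disconn.prems(5) by (rule finite_subset)
      obtain e where e: "e \<le> d ?Cu" "elim_depth (?Cu - {v}) ?B e"
        using ih disconn.prems(1-4) finCu uCu vCu by blast
      have "e \<le> ?m" using e(1) dle[OF Cu] by simp
      then show ?thesis using 1 cl sub e(2) by blast
    next
      case 2
      have vP: "v \<notin> P" using vC[OF 2] .
      obtain z where z: "P = component W A z" using 2(1) unfolding components_def by blast
      have eqv: "\<forall>x\<in>W. fmap u v x \<in> P \<longleftrightarrow> x \<in> P"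
        using 2(2) vP by (auto simp: fmap_def)
      have cl: "closedp ?V ?B P"
        using closed_cimg[OF disconn.prems(6,7,4) comp_closed eqv[unfolded z]] z by simp
      have sub: "P \<subseteq> ?V" using z comp_sub[of W A z] vP by blast
      have "elim_depth P A (d P)" using disconn.IH 2(1) by blast
      then have "elim_depth P ?B (d P)"
        by (rule elim_cong) (rule restrict_same[OF 2(2) vP disconn.prems(1)])
      then show ?thesis using cl sub dle[OF 2(1)] by blast
    qed
  qed
  have finV: "finite ?V" using disconn.prems(5) by simp
  have Vne: "?V \<noteq> {}" using disconn.prems(6,4) by blast
  show ?case by (rule partition_depth[OF finV Vne un pp])
next
  case (one_source W A s)
  let ?V = "W - {v}"
  let ?B = "cimg u v A"
  have finV: "finite ?V" using one_source.prems(5) by simp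
  have Vne: "?V \<noteq> {}" using one_source.prems(6,4) by blast
  have uvr: "(u,v) \<in> restrict_arcs W A" using one_source.prems(3,6,7) by (simp add: restrict_arcs_def)
  have sv: "s \<noteq> v" using one_source.hyps(2) uvr by (auto simp: is_source_def)
  have sW: "s \<in> W" using one_source.hyps(2) by (simp add: is_source_def)
  have allW: "x \<in> reach W A s" if xW: "x \<in> W" for x
  proof -
    obtain s1 where "is_source W A s1" "x \<in> reach W A s1"
      using exists_source_reach[OF one_source.prems(5,1) xW] by blast
    then show ?thesis using one_source.hyps(3) by blast
  qed
  have allV: "y \<in> reach ?V ?B s" if y: "y \<in> ?V" for y
  proof -
    have "(s,y) \<in> (restrict_arcs W A)\<^sup>*" using allW[of y] y by (simp add: reach_def)
    from path_map[OF one_source.prems(6,7,4) this]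
    have "(s,y) \<in> (restrict_arcs ?V ?B)\<^sup>*" using sv y by (simp add: fmap_id)
    then show ?thesis using y by (simp add: reach_def)
  qed
  have sV: "is_source ?V ?B s"
    unfolding is_source_def
  proof (intro conjI allI notI)
    show "s \<in> ?V" using sW sv by simp
    fix p assume ps: "(p,s) \<in> restrict_arcs ?V ?B"
    then have "p \<in> ?V" by (simp add: restrict_arcs_def)
    then have "(s,p) \<in> (restrict_arcs ?V ?B)\<^sup>*" using allV by (simp add: reach_def)
    with ps have "(s,s) \<in> (restrict_arcs ?V ?B)\<^sup>+" by (simp add: rtrancl_into_trancl1)
    moreover have "acyclic (restrict_arcs ?V ?B)"
      by (rule acyclic_subset[OF one_source.prems(2)]) (auto simp: restrict_arcs_def)
    ultimately show False unfolding acyclic_def by blast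
  qed
  have "?V - reach ?V ?B s = {}" using allV by blast
  then have "elim_depth (?V - reach ?V ?B s) ?B 0" by (simp only: elim_depth.empty)
  from source_step[OF finV Vne sV this] show ?case by simp
next
  case (many_sources W A s t d)
  let ?V = "W - {v}"
  let ?B = "cimg u v A"
  let ?R = "reach W A s"
  have finV: "finite ?V" using many_sources.prems(5) by simp
  have Vne: "?V \<noteq> {}" using many_sources.prems(6,4) by blast
  have uvr: "(u,v) \<in> restrict_arcs W A" using many_sources.prems(3,6,7) by (simp add: restrict_arcs_def)
  have sv: "s \<noteq> v" using many_sources.hyps(2) uvr by (auto simp: is_source_def)
  have sW: "s \<in> W" using many_sources.hyps(2) by (simp add: is_source_def)
  have sV: "s \<in> ?V" using sW sv by simp
  show ?case
  proof (cases "v \<in> ?R")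
    case True
    obtain s0 where s0: "is_source ?V ?B s0" "s \<in> reach ?V ?B s0"
      using exists_source_reach[OF finV many_sources.prems(2) sV] by blast
    let ?Rz = "reach ?V ?B s0"
    let ?X = "?V - ?Rz"
    have s0s: "(s0, s) \<in> (restrict_arcs ?V ?B)\<^sup>*" using s0(2) by (simp add: reach_def)
    have mapR: "fmap u v z \<in> ?Rz" if zR: "z \<in> reach W A s" for z
    proof -
      have "(s,z) \<in> (restrict_arcs W A)\<^sup>*" using zR by (simp add: reach_def)
      from path_map[OF many_sources.prems(6,7,4) this]
      have "(s, fmap u v z) \<in> (restrict_arcs ?V ?B)\<^sup>*" using sv by (simp add: fmap_id)
      with s0s have "(s0, fmap u v z) \<in> (restrict_arcs ?V ?B)\<^sup>*" by (rule rtrancl_trans)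
      moreover have "fmap u v z \<in> ?V"
        using zR fmap_in[of z W u v] many_sources.prems(6) fmap_neq[OF many_sources.prems(4)]
        by (auto simp: reach_def)
      ultimately show ?thesis by (simp add: reach_def)
    qed
    have uR0: "u \<in> ?Rz" using mapR[OF True] by (simp add: fmap_v)
    have Rsub: "z \<in> ?Rz" if zz: "z \<in> ?R" "z \<noteq> v" for z
    proof -
      have "fmap u v z = z" using zz(2) by (rule fmap_id)
      then show ?thesis using mapR[OF zz(1)] by simp
    qed
    have XW: "?X \<subseteq> W - ?R" using Rsub by blast
    have down: "\<forall>a b. (a,b) \<in> A \<longrightarrow> a \<in> W - ?R \<longrightarrow> a \<notin> ?X \<longrightarrow> b \<in> ?X \<longrightarrow> False"
    proof (intro allI impI)
      fix a b assume ab: "(a,b) \<in> A" "a \<in> W - ?R" "a \<notin> ?X" "b \<in> ?X"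
      have av: "a \<noteq> v" using ab(2) True by blast
      have aR0: "a \<in> ?Rz" using ab(2,3) av by blast
      have bv: "b \<noteq> v" using ab(4) by blast
      have "a \<noteq> b" using aR0 ab(4) by blast
      then have "(a,b) \<in> ?B" using ab(1) av bv unfolding cimg_def by (force simp: fmap_id)
      then have "(a,b) \<in> restrict_arcs ?V ?B" using ab(2,4) av by (simp add: restrict_arcs_def)
      moreover have "(s0, a) \<in> (restrict_arcs ?V ?B)\<^sup>*" using aR0 by (simp add: reach_def)
      ultimately have "(s0, b) \<in> (restrict_arcs ?V ?B)\<^sup>*" by (meson rtrancl.rtrancl_into_rtrancl)
      moreover have "b \<in> ?V" using ab(4) by blast
      ultimately have "b \<in> ?Rz" unfolding reach_def by blast
      then show False using ab(4) by blast
    qed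
    have finWR: "finite (W - ?R)" using many_sources.prems(5) by simp
    obtain e where e: "e \<le> d" "elim_depth ?X A e"
      using down_delete[OF finWR many_sources.prems(1) many_sources.hyps(5) XW down] by blast
    have uX: "u \<notin> ?X" using uR0 by blast
    have vX: "v \<notin> ?X" by blast
    have "elim_depth ?X ?B e"
      by (rule elim_cong[OF e(2)]) (rule restrict_same[OF uX vX many_sources.prems(1)])
    from source_step[OF finV Vne s0(1) this] obtain e' where "e' \<le> Suc e" "elim_depth ?V ?B e'" by blast
    then show ?thesis using e(1) by (intro exI[of _ e']) simp
  next
    case False
    have su: "s \<noteq> u"
    proof
      assume "s = u"
      then have "(s,v) \<in> (restrict_arcs W A)\<^sup>*" using uvr by blast
      then show False using False many_sources.prems(7) by (simp add: reach_def)
    qed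
    have uR: "u \<notin> ?R"
    proof
      assume "u \<in> ?R"
      then have "(s,u) \<in> (restrict_arcs W A)\<^sup>*" by (simp add: reach_def)
      then have "(s,v) \<in> (restrict_arcs W A)\<^sup>*" using uvr by (rule rtrancl.rtrancl_into_rtrancl)
      then show False using False many_sources.prems(7) by (simp add: reach_def)
    qed
    have src: "is_source ?V ?B s"
      by (rule source_cimg[OF many_sources.prems(6,7,4) many_sources.hyps(2) su sv])
    have rr: "reach ?V ?B s = ?R"
      by (rule reach_cimg[OF many_sources.prems(6,7,4) sW sv False many_sources.prems(3)])
    have finWR: "finite (W - ?R)" using many_sources.prems(5) by simp
    have uWR: "u \<in> W - ?R" using many_sources.prems(6) uR by blast
    have vWR: "v \<in> W - ?R" using many_sources.prems(7) False by blast
    obtain e where e: "e \<le> d" "elim_depth ((W - ?R) - {v}) ?B e"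
      using many_sources.IH[OF many_sources.prems(1-4) finWR uWR vWR] by blast
    have "?V - reach ?V ?B s = (W - ?R) - {v}" using rr by blast
    with e(2) have "elim_depth (?V - reach ?V ?B s) ?B e" by simp
    from source_step[OF finV Vne src this] obtain e' where "e' \<le> Suc e" "elim_depth ?V ?B e'" by blast
    then show ?thesis using e(1) by (intro exI[of _ e']) simp
  qed
qed

definition mapr :: "('a \<Rightarrow> 'b) \<Rightarrow> ('a \<times> 'a) set \<Rightarrow> ('b \<times> 'b) set" where
  "mapr h A = {(h a, h b) | a b. (a,b) \<in> A}"

lemma rtrancl_mapr:
  assumes "inj_on h V0" "R \<subseteq> V0 \<times> V0" "x \<in> V0" "y \<in> V0"
  shows "(h x, h y) \<in> (mapr h R)\<^sup>* \<longleftrightarrow> (x,y) \<in> R\<^sup>*"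
proof
  have "(p,q) \<in> (mapr h R)\<^sup>* \<Longrightarrow> \<forall>x\<in>V0. p = h x \<longrightarrow> (\<exists>y\<in>V0. q = h y \<and> (x,y) \<in> R\<^sup>*)" for p q
  proof (induction rule: rtrancl_induct)
    case base then show ?case by blast
  next
    case (step q r)
    show ?case
    proof (intro ballI impI)
      fix x assume x: "x \<in> V0" "p = h x"
      obtain y where y: "y \<in> V0" "q = h y" "(x,y) \<in> R\<^sup>*" using step.IH x by blast
      obtain a b where ab: "q = h a" "r = h b" "(a,b) \<in> R" using step.hyps(2) unfolding mapr_def by blast
      have abV: "a \<in> V0" "b \<in> V0" using ab(3) assms(2) by auto
      have "a = y" using assms(1) abV(1) y(1) ab(1) y(2) by (simp add: inj_on_eq_iff)
      then have "(x,b) \<in> R\<^sup>*" using y(3) ab(3) by (simp add: rtrancl.rtrancl_into_rtrancl)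
      then show "\<exists>y\<in>V0. r = h y \<and> (x,y) \<in> R\<^sup>*" using abV(2) ab(2) by blast
    qed
  qed
  moreover assume "(h x, h y) \<in> (mapr h R)\<^sup>*"
  ultimately obtain y' where "y' \<in> V0" "h y = h y'" "(x,y') \<in> R\<^sup>*" using assms(3) by blast
  then show "(x,y) \<in> R\<^sup>*" using assms(1,4) by (simp add: inj_on_eq_iff)
next
  assume "(x,y) \<in> R\<^sup>*"
  then show "(h x, h y) \<in> (mapr h R)\<^sup>*"
  proof (induction rule: rtrancl_induct)
    case base then show ?case by simp
  next
    case (step y z)
    have "(h y, h z) \<in> mapr h R" using step.hyps(2) unfolding mapr_def by blast
    with step.IH show ?case by (rule rtrancl.rtrancl_into_rtrancl)
  qed
qed

lemma mapr_restrict: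
  assumes "inj_on h V0" "A \<subseteq> V0 \<times> V0" "W \<subseteq> V0"
  shows "restrict_arcs (h ` W) (mapr h A) = mapr h (restrict_arcs W A)"
proof
  show "restrict_arcs (h ` W) (mapr h A) \<subseteq> mapr h (restrict_arcs W A)"
  proof
    fix p assume "p \<in> restrict_arcs (h ` W) (mapr h A)"
    then obtain a b where ab: "p = (h a, h b)" "(a,b) \<in> A" "h a \<in> h ` W" "h b \<in> h ` W"
      unfolding restrict_arcs_def mapr_def by blast
    have abV: "a \<in> V0" "b \<in> V0" using ab(2) assms(2) by auto
    have "a \<in> W" using ab(3) abV(1) assms(1,3) by (auto simp: inj_on_eq_iff)
    moreover have "b \<in> W" using ab(4) abV(2) assms(1,3) by (auto simp: inj_on_eq_iff)
    ultimately show "p \<in> mapr h (restrict_arcs W A)" using ab unfolding mapr_def restrict_arcs_def by blast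
  qed
  show "mapr h (restrict_arcs W A) \<subseteq> restrict_arcs (h ` W) (mapr h A)"
    unfolding mapr_def restrict_arcs_def by blast
qed

lemma mapr_un_conv: "mapr h (R \<union> R\<inverse>) = mapr h R \<union> (mapr h R)\<inverse>"
  unfolding mapr_def by blast

lemma mapr_sub: "R \<subseteq> V0 \<times> V0 \<Longrightarrow> mapr h R \<subseteq> h ` V0 \<times> h ` V0"
  unfolding mapr_def by blast

context
  fixes h :: "'a \<Rightarrow> 'b" and V0 :: "'a set" and A :: "('a \<times> 'a) set"
  assumes inj: "inj_on h V0" and AV: "A \<subseteq> V0 \<times> V0"
begin

lemma rsub: "W \<subseteq> V0 \<Longrightarrow> restrict_arcs W A \<subseteq> V0 \<times> V0"
  by (auto simp: restrict_arcs_def)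

lemma map_source:
  assumes "W \<subseteq> V0" "s \<in> W"
  shows "is_source (h ` W) (mapr h A) (h s) \<longleftrightarrow> is_source W A s"
proof -
  have eq: "restrict_arcs (h ` W) (mapr h A) = mapr h (restrict_arcs W A)"
    by (rule mapr_restrict[OF inj AV assms(1)])
  have "(\<exists>p. (p, h s) \<in> mapr h (restrict_arcs W A)) \<longleftrightarrow> (\<exists>p. (p, s) \<in> restrict_arcs W A)"
  proof
    assume "\<exists>p. (p, h s) \<in> mapr h (restrict_arcs W A)"
    then obtain a b where ab: "h b = h s" "(a,b) \<in> restrict_arcs W A" unfolding mapr_def by fastforce
    then have "b \<in> V0" using assms(1) by (auto simp: restrict_arcs_def)
    then have "b = s" using ab(1) inj assms by (auto simp: inj_on_eq_iff)
    then show "\<exists>p. (p, s) \<in> restrict_arcs W A" using ab(2) by blast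
  next
    assume "\<exists>p. (p, s) \<in> restrict_arcs W A"
    then show "\<exists>p. (p, h s) \<in> mapr h (restrict_arcs W A)" unfolding mapr_def by blast
  qed
  then show ?thesis unfolding is_source_def eq using assms(2) by blast
qed

lemma map_reachset:
  assumes "W \<subseteq> V0" "x \<in> W" "R \<subseteq> W \<times> W"
  shows "{w \<in> h ` W. (h x, w) \<in> (mapr h R)\<^sup>*} = h ` {w \<in> W. (x, w) \<in> R\<^sup>*}"
proof -
  have R0: "R \<subseteq> V0 \<times> V0" using assms(1,3) by blast
  have "(h x, h w) \<in> (mapr h R)\<^sup>* \<longleftrightarrow> (x,w) \<in> R\<^sup>*" if "w \<in> W" for w
    using rtrancl_mapr[OF inj R0] assms that by blast
  then show ?thesis by auto
qed

lemma map_reach: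
  assumes "W \<subseteq> V0" "s \<in> W"
  shows "reach (h ` W) (mapr h A) (h s) = h ` reach W A s"
proof -
  have eq: "restrict_arcs (h ` W) (mapr h A) = mapr h (restrict_arcs W A)"
    by (rule mapr_restrict[OF inj AV assms(1)])
  have "restrict_arcs W A \<subseteq> W \<times> W" by (auto simp: restrict_arcs_def)
  from map_reachset[OF assms this] show ?thesis unfolding reach_def eq .
qed

lemma map_component:
  assumes "W \<subseteq> V0" "x \<in> W"
  shows "component (h ` W) (mapr h A) (h x) = h ` component W A x"
proof -
  have eq: "restrict_arcs (h ` W) (mapr h A) = mapr h (restrict_arcs W A)"
    by (rule mapr_restrict[OF inj AV assms(1)])
  have "restrict_arcs W A \<union> (restrict_arcs W A)\<inverse> \<subseteq> W \<times> W" by (auto simp: restrict_arcs_def)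
  from map_reachset[OF assms this] show ?thesis unfolding component_def eq mapr_un_conv .
qed

lemma map_components:
  assumes "W \<subseteq> V0"
  shows "components (h ` W) (mapr h A) = (\<lambda>C. h ` C) ` components W A"
proof -
  have "components (h ` W) (mapr h A) = (\<lambda>x. component (h ` W) (mapr h A) (h x)) ` W"
    unfolding components_def by (simp add: image_comp comp_def)
  also have "\<dots> = (\<lambda>x. h ` component W A x) ` W"
    using map_component[OF assms] by simp
  also have "\<dots> = (\<lambda>C. h ` C) ` components W A"
    unfolding components_def by (simp add: image_comp comp_def)
  finally show ?thesis .
qed

lemma map_uconnected:
  assumes "W \<subseteq> V0"
  shows "uconnected (h ` W) (mapr h A) \<longleftrightarrow> uconnected W A"
proof -
  have injW: "inj_on h W" using inj assms by (rule inj_on_subset)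
  have "(\<forall>y\<in>h ` W. component (h ` W) (mapr h A) y = h ` W) \<longleftrightarrow> (\<forall>x\<in>W. component W A x = W)"
  proof -
    have "(\<forall>y\<in>h ` W. component (h ` W) (mapr h A) y = h ` W) \<longleftrightarrow> (\<forall>x\<in>W. h ` component W A x = h ` W)"
      using map_component[OF assms] by simp
    also have "\<dots> \<longleftrightarrow> (\<forall>x\<in>W. component W A x = W)"
    proof -
      have "h ` component W A x = h ` W \<longleftrightarrow> component W A x = W" for x
        by (rule inj_on_image_eq_iff[OF injW comp_sub[of W A x] order_refl])
      then show ?thesis by simp
    qed
    finally show ?thesis .
  qed
  then show ?thesis unfolding uconnected_def by simp
qed

lemma elim_map:
  "elim_depth W A' d \<Longrightarrow> A' = A \<Longrightarrow> W \<subseteq> V0 \<Longrightarrow> elim_depth (h ` W) (mapr h A) d"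
proof (induction rule: elim_depth.induct)
  case (empty A')
  show ?case using elim_depth.empty[of "mapr h A"] by simp
next
  case (disconn W A' d)
  have AA: "A' = A" by (rule disconn.prems(1))
  have WV: "W \<subseteq> V0" by (rule disconn.prems(2))
  have injW: "inj_on h W" using inj WV by (rule inj_on_subset)
  define d' where "d' = (\<lambda>C'. d (inv_into W h ` C'))"
  have cmp: "components (h ` W) (mapr h A) = (\<lambda>C. h ` C) ` components W A"
    by (rule map_components[OF WV])
  have d'C: "d' (h ` C) = d C" if "C \<in> components W A" for C
  proof -
    have "C \<subseteq> W" using that comp_sub[of W A] unfolding components_def by blast
    then show ?thesis unfolding d'_def using injW by simp
  qed
  have all: "\<forall>C'\<in>components (h ` W) (mapr h A). elim_depth C' (mapr h A) (d' C')"
  proof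
    fix C' assume "C' \<in> components (h ` W) (mapr h A)"
    then obtain C where C: "C \<in> components W A" "C' = h ` C" using cmp by blast
    have CW: "C \<subseteq> W" using C(1) comp_sub[of W A] unfolding components_def by blast
    have C1: "C \<in> components W A'" using C(1) AA by simp
    have "A' = A \<longrightarrow> C \<subseteq> V0 \<longrightarrow> elim_depth (h ` C) (mapr h A) (d C)"
      using bspec[OF disconn.IH C1] by blast
    then have "elim_depth (h ` C) (mapr h A) (d C)" using AA CW WV by blast
    then show "elim_depth C' (mapr h A) (d' C')" using C d'C by simp
  qed
  have ne: "h ` W \<noteq> {}" using disconn.hyps(1) by simp
  have nc: "\<not> uconnected (h ` W) (mapr h A)"
    using disconn.hyps(2) map_uconnected[OF WV] AA by simp
  have "elim_depth (h ` W) (mapr h A) (Max (d' ` components (h ` W) (mapr h A)))"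
    by (rule elim_depth.disconn[OF ne nc all])
  moreover have "d' ` components (h ` W) (mapr h A) = d ` components W A"
    unfolding cmp image_comp comp_def using d'C by simp
  ultimately show ?case using AA by simp
next
  case (one_source W A' s)
  have AA: "A' = A" by (rule one_source.prems(1))
  have WV: "W \<subseteq> V0" by (rule one_source.prems(2))
  note hy = one_source.hyps[unfolded AA]
  have sW: "s \<in> W" using hy(2) by (simp add: is_source_def)
  have uc: "uconnected (h ` W) (mapr h A)" using hy(1) map_uconnected[OF WV] by simp
  have src: "is_source (h ` W) (mapr h A) (h s)" using hy(2) map_source[OF WV sW] by simp
  have uniq: "\<forall>t'. is_source (h ` W) (mapr h A) t' \<longrightarrow> t' = h s"
  proof (intro allI impI)
    fix t' assume t': "is_source (h ` W) (mapr h A) t'"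
    then obtain t where t: "t \<in> W" "t' = h t" by (auto simp: is_source_def)
    then have "is_source W A t" using t' map_source[OF WV t(1)] by simp
    then show "t' = h s" using hy(3) t(2) by simp
  qed
  show ?case by (rule elim_depth.one_source[OF uc src uniq])
next
  case (many_sources W A' s t d)
  have AA: "A' = A" by (rule many_sources.prems(1))
  have WV: "W \<subseteq> V0" by (rule many_sources.prems(2))
  note hy = many_sources.hyps(1-4)[unfolded AA]
  have injW: "inj_on h W" using inj WV by (rule inj_on_subset)
  have sW: "s \<in> W" using hy(2) by (simp add: is_source_def)
  have tW: "t \<in> W" using hy(3) by (simp add: is_source_def)
  have uc: "uconnected (h ` W) (mapr h A)" using hy(1) map_uconnected[OF WV] by simp
  have srcs: "is_source (h ` W) (mapr h A) (h s)" using hy(2) map_source[OF WV sW] by simp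
  have srct: "is_source (h ` W) (mapr h A) (h t)" using hy(3) map_source[OF WV tW] by simp
  have ne: "h t \<noteq> h s" using hy(4) injW sW tW by (auto simp: inj_on_eq_iff)
  have rr: "reach (h ` W) (mapr h A) (h s) = h ` reach W A s"
    by (rule map_reach[OF WV sW])
  have "h ` W - reach (h ` W) (mapr h A) (h s) = h ` (W - reach W A s)"
    unfolding rr by (rule inj_on_image_set_diff[OF injW, symmetric]) (auto simp: reach_def)
  moreover have "elim_depth (h ` (W - reach W A s)) (mapr h A) d"
  proof -
    have "W - reach W A' s \<subseteq> V0" using WV by blast
    from many_sources.IH[OF AA this] show ?thesis using AA by simp
  qed
  ultimately have "elim_depth (h ` W - reach (h ` W) (mapr h A) (h s)) (mapr h A) d" by simp
  then show ?case by (rule elim_depth.many_sources[OF uc srcs srct ne])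
qed

end

lemma ug_edge2: "ugraph V E \<Longrightarrow> {a,b} \<in> E \<Longrightarrow> a \<in> V \<and> b \<in> V \<and> a \<noteq> b"
proof -
  assume ug: "ugraph V E" and e: "{a,b} \<in> E"
  then obtain c d where cd: "{a,b} = {c,d}" "c \<in> V" "d \<in> V" "c \<noteq> d"
    unfolding ugraph_def by blast
  then show ?thesis by (auto simp: doubleton_eq_iff)
qed

lemma ao_sub: "ugraph V E \<Longrightarrow> acyclic_orientation V E A \<Longrightarrow> A \<subseteq> V \<times> V"
proof
  fix p assume ug: "ugraph V E" and ao: "acyclic_orientation V E A" and p: "p \<in> A"
  obtain a b where ab: "p = (a,b)" by (cases p)
  then have "{a,b} \<in> E" using ao p unfolding acyclic_orientation_def by blast
  then show "p \<in> V \<times> V" using ug_edge2[OF ug] ab by blast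
qed

lemma ao_acyc: "acyclic_orientation V E A \<Longrightarrow> acyclic A"
  unfolding acyclic_orientation_def by blast

lemma ao_edge: "acyclic_orientation V E A \<Longrightarrow> (a,b) \<in> A \<Longrightarrow> {a,b} \<in> E"
  unfolding acyclic_orientation_def by blast

lemma ao_orient: "acyclic_orientation V E A \<Longrightarrow> {a,b} \<in> E \<Longrightarrow> a \<noteq> b \<Longrightarrow> ((a,b) \<in> A \<longleftrightarrow> (b,a) \<notin> A)"
  unfolding acyclic_orientation_def by blast

lemma dag_dtd_le: "elim_depth V A d \<Longrightarrow> dag_dtd V A \<le> d"
  unfolding dag_dtd_def by (rule Least_le)

lemma dag_dtd_ex: "finite V \<Longrightarrow> acyclic A \<Longrightarrow> elim_depth V A (dag_dtd V A)"
proof -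
  assume "finite V" "acyclic A"
  then obtain d where "elim_depth V A d" using elim_exists by blast
  then show ?thesis unfolding dag_dtd_def by (rule LeastI)
qed

definition dle :: "'b set \<Rightarrow> 'b set set \<Rightarrow> 'a set \<Rightarrow> 'a set set \<Rightarrow> bool" where
  "dle V1 E1 V2 E2 \<longleftrightarrow> (\<forall>B. acyclic_orientation V1 E1 B \<longrightarrow>
      (\<exists>A. acyclic_orientation V2 E2 A \<and> dag_dtd V1 B \<le> dag_dtd V2 A))"

lemma dle_refl: "dle V E V E"
  unfolding dle_def by blast

lemma dle_trans: "dle V1 E1 V2 E2 \<Longrightarrow> dle V2 E2 V3 E3 \<Longrightarrow> dle V1 E1 V3 E3"
  unfolding dle_def by (meson le_trans)

lemma acyclic_add_sink:
  assumes "acyclic B" "\<forall>p q. (p,q) \<in> B \<longrightarrow> p \<noteq> x" "\<forall>p q. (p,q) \<in> S \<longrightarrow> q = x \<and> p \<noteq> x"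
  shows "acyclic (B \<union> S)"
proof -
  have "(a,b) \<in> (B \<union> S)\<^sup>+ \<Longrightarrow> (a,b) \<in> B\<^sup>+ \<or> b = x" for a b
  proof (induction rule: trancl_induct)
    case (base y)
    then show ?case using assms(3) by blast
  next
    case (step y z)
    show ?case
    proof (cases "(y,z) \<in> B")
      case True
      then have "y \<noteq> x" using assms(2) by blast
      then have "(a,y) \<in> B\<^sup>+" using step.IH by blast
      then show ?thesis using True by (meson trancl.trancl_into_trancl)
    next
      case False
      then have "(y,z) \<in> S" using step.hyps(2) by blast
      then show ?thesis using assms(3) by blast
    qed
  qed
  then show ?thesis unfolding acyclic_def
  proof (intro allI notI)
    fix a assume h: "\<And>a b. (a,b) \<in> (B \<union> S)\<^sup>+ \<Longrightarrow> (a,b) \<in> B\<^sup>+ \<or> b = x" and aa: "(a,a) \<in> (B \<union> S)\<^sup>+"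
    from h[OF aa] show False
    proof
      assume "(a,a) \<in> B\<^sup>+" then show False using assms(1) unfolding acyclic_def by blast
    next
      assume ax: "a = x"
      obtain c where "(a,c) \<in> B \<union> S" using tranclD[OF aa] by blast
      then show False using ax assms(2,3) by blast
    qed
  qed
qed

lemma dle_delete:
  assumes ug: "ugraph V E" and x: "x \<in> V"
  shows "dle (V - {x}) {e \<in> E. x \<notin> e} V E"
  unfolding dle_def
proof (intro allI impI)
  fix B assume B: "acyclic_orientation (V - {x}) {e \<in> E. x \<notin> e} B"
  define S where "S = {(w,x) | w. {w,x} \<in> E}"
  define A where "A = B \<union> S"
  have Bx: "p \<noteq> x \<and> q \<noteq> x \<and> {p,q} \<in> E" if "(p,q) \<in> B" for p q
    using ao_edge[OF B that] by auto
  have Sx: "q = x \<and> p \<noteq> x \<and> {p,q} \<in> E" if "(p,q) \<in> S" for p q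
  proof -
    have "q = x" "{p,x} \<in> E" using that unfolding S_def by blast+
    then show ?thesis using ug_edge2[OF ug] by blast
  qed
  have acB: "acyclic B" by (rule ao_acyc[OF B])
  have acA: "acyclic A" unfolding A_def
    by (rule acyclic_add_sink[OF acB]) (use Bx Sx in blast)+
  have ao: "acyclic_orientation V E A"
    unfolding acyclic_orientation_def
  proof (intro conjI allI impI)
    show "A \<subseteq> {(u, v). {u, v} \<in> E}" unfolding A_def using Bx Sx by blast
    show "acyclic A" by (rule acA)
    fix a b assume ab: "{a,b} \<in> E" "a \<noteq> b"
    show "(a, b) \<in> A \<longleftrightarrow> (b, a) \<notin> A"
    proof (cases "a = x")
      case True
      have "(a,b) \<notin> A" using Bx Sx True ab(2) unfolding A_def by blast
      moreover have "(b,a) \<in> S" using True ab(1) unfolding S_def by (auto simp: insert_commute)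
      ultimately show ?thesis unfolding A_def by blast
    next
      case ax: False
      show ?thesis
      proof (cases "b = x")
        case True
        have "(b,a) \<notin> A" using Bx Sx True ab(2) unfolding A_def by blast
        moreover have "(a,b) \<in> S" using True ab(1) unfolding S_def by auto
        ultimately show ?thesis unfolding A_def by blast
      next
        case bx: False
        have "{a,b} \<in> {e \<in> E. x \<notin> e}" using ab(1) ax bx by simp
        then have "(a,b) \<in> B \<longleftrightarrow> (b,a) \<notin> B" using ao_orient[OF B _ ab(2)] by blast
        moreover have "(a,b) \<notin> S" "(b,a) \<notin> S" using Sx ax bx by blast+
        ultimately show ?thesis unfolding A_def by blast
      qed
    qed
  qed
  have finV: "finite V" using ug by (simp add: ugraph_def)
  have el: "elim_depth V A (dag_dtd V A)" by (rule dag_dtd_ex[OF finV acA])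
  have sink: "\<forall>y. (x,y) \<notin> restrict_arcs V A"
    using Bx Sx unfolding A_def restrict_arcs_def by blast
  obtain e where e: "e \<le> dag_dtd V A" "elim_depth (V - {x}) A e"
    using sink_delete[OF el finV acA x sink] by blast
  have "restrict_arcs (V - {x}) A = restrict_arcs (V - {x}) B"
    using Sx unfolding A_def restrict_arcs_def by blast
  with e(2) have "elim_depth (V - {x}) B e" by (rule elim_cong)
  then have "dag_dtd (V - {x}) B \<le> dag_dtd V A" using e(1) dag_dtd_le by (metis le_trans)
  then show "\<exists>A. acyclic_orientation V E A \<and> dag_dtd (V - {x}) B \<le> dag_dtd V A" using ao by blast
qed

lemma ug_delete: "ugraph V E \<Longrightarrow> ugraph (V - {x}) {e \<in> E. x \<notin> e}"
  unfolding ugraph_def by blast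

lemma ug_contract:
  assumes "ugraph V E" "{u,v} \<in> E" "u \<noteq> v"
  shows "ugraph (V - {v}) ({e \<in> E. v \<notin> e} \<union> {{u, w} | w. {v, w} \<in> E \<and> w \<noteq> u})"
  unfolding ugraph_def
proof (intro conjI subsetI)
  show "finite (V - {v})" using assms(1) by (simp add: ugraph_def)
  fix e assume "e \<in> {e \<in> E. v \<notin> e} \<union> {{u, w} | w. {v, w} \<in> E \<and> w \<noteq> u}"
  then consider "e \<in> E" "v \<notin> e" | w where "e = {u,w}" "{v,w} \<in> E" "w \<noteq> u" by blast
  then show "e \<in> {{a, b} |a b. a \<in> V - {v} \<and> b \<in> V - {v} \<and> a \<noteq> b}"
  proof cases
    case 1
    then obtain a b where "e = {a,b}" "a \<in> V" "b \<in> V" "a \<noteq> b" using assms(1) unfolding ugraph_def by blast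
    then show ?thesis using 1(2) by blast
  next
    case 2
    have "u \<in> V" using ug_edge2[OF assms(1,2)] by blast
    moreover have "w \<in> V" "w \<noteq> v" using ug_edge2[OF assms(1) 2(2)] by blast+
    ultimately show ?thesis using 2(1,3) assms(3) by blast
  qed
qed

lemma dle_contract:
  assumes ug: "ugraph V E" and uv: "{u,v} \<in> E" "u \<noteq> v"
  shows "dle (V - {v}) ({e \<in> E. v \<notin> e} \<union> {{u, w} | w. {v, w} \<in> E \<and> w \<noteq> u}) V E"
  unfolding dle_def
proof (intro allI impI)
  let ?E = "{e \<in> E. v \<notin> e} \<union> {{u, w} | w. {v, w} \<in> E \<and> w \<noteq> u}"
  let ?f = "fmap u v"
  fix B assume B: "acyclic_orientation (V - {v}) ?E B"
  define A where "A = {(a,b). {a,b} \<in> E \<and> {a,b} \<noteq> {u,v} \<and> (fmap u v a, fmap u v b) \<in> B} \<union> {(u,v)}"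
  have uV: "u \<in> V" and vV: "v \<in> V" using ug_edge2[OF ug uv(1)] by blast+
  have fu: "?f u = u" using uv(2) by (simp add: fmap_def)
  have fv: "?f v = u" by (simp add: fmap_def)
  have emap: "{?f a, ?f b} \<in> ?E \<and> ?f a \<noteq> ?f b" if ab: "{a,b} \<in> E" "{a,b} \<noteq> {u,v}" for a b
  proof -
    have abV: "a \<in> V" "b \<in> V" "a \<noteq> b" using ug_edge2[OF ug ab(1)] by blast+
    show ?thesis
    proof (cases "a = v")
      case True
      then have bu: "b \<noteq> u" using ab(2) by (auto simp: insert_commute)
      have bv: "b \<noteq> v" using True abV(3) by simp
      have "{?f a, ?f b} = {u, b}" using True bv by (simp add: fmap_def)
      moreover have "{u,b} \<in> ?E" using ab(1) True bu by blast
      ultimately show ?thesis using True bv bu by (simp add: fmap_def)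
    next
      case av: False
      show ?thesis
      proof (cases "b = v")
        case True
        then have au: "a \<noteq> u" using ab(2) by auto
        have "{?f a, ?f b} = {u, a}" using True av by (simp add: fmap_def insert_commute)
        moreover have "{v,a} \<in> E" using ab(1) True by (simp add: insert_commute)
        then have "{u,a} \<in> ?E" using au by blast
        ultimately show ?thesis using True av au by (simp add: fmap_def)
      next
        case bv: False
        have "{?f a, ?f b} = {a,b}" using av bv by (simp add: fmap_def)
        moreover have "{a,b} \<in> ?E" using ab(1) av bv by simp
        ultimately show ?thesis using av bv abV(3) by (simp add: fmap_def)
      qed
    qed
  qed
  have acB: "acyclic B" by (rule ao_acyc[OF B])
  have Bnl: "(p,p) \<notin> B" for p using acB unfolding acyclic_def by blast
  have Aarc: "(a,b) \<in> A \<Longrightarrow> (a = u \<and> b = v) \<or> ((?f a, ?f b) \<in> B \<and> {a,b} \<in> E \<and> {a,b} \<noteq> {u,v})" for a b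
    unfolding A_def by blast
  have tr: "(a,b) \<in> A\<^sup>+ \<Longrightarrow> (?f a, ?f b) \<in> B\<^sup>+ \<or> (a = u \<and> b = v)" for a b
  proof (induction rule: trancl_induct)
    case (base y)
    then show ?case using Aarc[of a y] by blast
  next
    case (step y z)
    from step.IH show ?case
    proof
      assume ih: "(?f a, ?f y) \<in> B\<^sup>+"
      from Aarc[OF step.hyps(2)] show ?thesis
      proof
        assume "y = u \<and> z = v"
        then have "?f y = ?f z" using fu fv by simp
        then show ?thesis using ih by simp
      next
        assume "(?f y, ?f z) \<in> B \<and> {y,z} \<in> E \<and> {y,z} \<noteq> {u,v}"
        then show ?thesis using ih by (meson trancl.trancl_into_trancl)
      qed
    next
      assume ih: "a = u \<and> y = v"
      from Aarc[OF step.hyps(2)] show ?thesis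
      proof
        assume "y = u \<and> z = v"
        then show ?thesis using ih uv(2) by simp
      next
        assume yz: "(?f y, ?f z) \<in> B \<and> {y,z} \<in> E \<and> {y,z} \<noteq> {u,v}"
        have "?f a = ?f y" using ih fu fv by simp
        then show ?thesis using yz by auto
      qed
    qed
  qed
  have acA: "acyclic A" unfolding acyclic_def
  proof (intro allI notI)
    fix a assume "(a,a) \<in> A\<^sup>+"
    from tr[OF this] show False
    proof
      assume "(?f a, ?f a) \<in> B\<^sup>+" then show False using acB unfolding acyclic_def by blast
    next
      assume "a = u \<and> a = v" then show False using uv(2) by blast
    qed
  qed
  have uvA: "(u,v) \<in> A" unfolding A_def by blast
  have ao: "acyclic_orientation V E A"
    unfolding acyclic_orientation_def
  proof (intro conjI allI impI)
    show "A \<subseteq> {(a, b). {a, b} \<in> E}" unfolding A_def using uv(1) by blast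
    show "acyclic A" by (rule acA)
    fix a b assume ab: "{a,b} \<in> E" "a \<noteq> b"
    show "(a, b) \<in> A \<longleftrightarrow> (b, a) \<notin> A"
    proof (cases "{a,b} = {u,v}")
      case True
      have vuA: "(v,u) \<notin> A" unfolding A_def using uv(2) by (auto simp: insert_commute)
      from True have "(a = u \<and> b = v) \<or> (a = v \<and> b = u)" by (auto simp: doubleton_eq_iff)
      then show ?thesis using uvA vuA by blast
    next
      case False
      have F2: "{b,a} \<noteq> {u,v}" using False by (simp add: insert_commute)
      have ab2: "{b,a} \<in> E" using ab(1) by (simp add: insert_commute)
      have abuv: "(a,b) \<noteq> (u,v)" "(b,a) \<noteq> (u,v)" using False F2 by auto
      have e1: "(a,b) \<in> A \<longleftrightarrow> (?f a, ?f b) \<in> B" using ab(1) False abuv unfolding A_def by auto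
      have e2: "(b,a) \<in> A \<longleftrightarrow> (?f b, ?f a) \<in> B" using ab2 F2 abuv unfolding A_def by auto
      have "(?f a, ?f b) \<in> B \<longleftrightarrow> (?f b, ?f a) \<notin> B"
        using ao_orient[OF B] emap[OF ab(1) False] by blast
      then show ?thesis using e1 e2 by simp
    qed
  qed
  have cB: "cimg u v A \<subseteq> B"
  proof
    fix p assume "p \<in> cimg u v A"
    then obtain a b where ab: "p = (?f a, ?f b)" "(a,b) \<in> A" "?f a \<noteq> ?f b" unfolding cimg_def by blast
    from Aarc[OF ab(2)] show "p \<in> B"
    proof
      assume "a = u \<and> b = v" then show ?thesis using ab(3) fu fv by simp
    next
      assume "(?f a, ?f b) \<in> B \<and> {a, b} \<in> E \<and> {a, b} \<noteq> {u, v}" then show ?thesis using ab(1) by simp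
    qed
  qed
  have acC: "acyclic (cimg u v A)" by (rule acyclic_subset[OF acB cB])
  have BE: "{p,q} \<in> ?E" if "(p,q) \<in> B" for p q by (rule ao_edge[OF B that])
  have rr: "restrict_arcs (V - {v}) (cimg u v A) = restrict_arcs (V - {v}) B"
  proof
    show "restrict_arcs (V - {v}) (cimg u v A) \<subseteq> restrict_arcs (V - {v}) B"
      using cB unfolding restrict_arcs_def by blast
    show "restrict_arcs (V - {v}) B \<subseteq> restrict_arcs (V - {v}) (cimg u v A)"
    proof
      fix r assume "r \<in> restrict_arcs (V - {v}) B"
      then obtain p q where pq: "r = (p,q)" "(p,q) \<in> B" "p \<in> V - {v}" "q \<in> V - {v}"
        unfolding restrict_arcs_def by blast
      have pnq: "p \<noteq> q" using pq(2) Bnl by blast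
      have "(p,q) \<in> cimg u v A"
      proof -
        from BE[OF pq(2)] consider "{p,q} \<in> E" "v \<notin> {p,q}" | w where "{p,q} = {u,w}" "{v,w} \<in> E" "w \<noteq> u"
          by blast
        then show ?thesis
        proof cases
          case 1
          have "{p,q} \<noteq> {u,v}" using 1(2) by blast
          moreover have "?f p = p" "?f q = q" using 1(2) by (auto simp: fmap_def)
          ultimately have "(p,q) \<in> A" using 1(1) pq(2) unfolding A_def by simp
          then show ?thesis unfolding cimg_def using pnq \<open>?f p = p\<close> \<open>?f q = q\<close> by force
        next
          case 2
          have wv: "w \<noteq> v" using ug_edge2[OF ug 2(2)] by blast
          have fw: "?f w = w" using wv by (simp add: fmap_def)
          have neq1: "{v,w} \<noteq> {u,v}" using 2(3) uv(2) by (auto simp: doubleton_eq_iff)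
          have neq2: "{w,v} \<noteq> {u,v}" using neq1 by (simp add: insert_commute)
          have wvE: "{w,v} \<in> E" using 2(2) by (simp add: insert_commute)
          from 2(1) have "(p = u \<and> q = w) \<or> (p = w \<and> q = u)" by (auto simp: doubleton_eq_iff)
          then show ?thesis
          proof
            assume pq2: "p = u \<and> q = w"
            then have "(v,w) \<in> A" using 2(2) neq1 pq(2) fv fw unfolding A_def by simp
            then show ?thesis unfolding cimg_def using pq2 fv fw pnq by force
          next
            assume pq2: "p = w \<and> q = u"
            then have "(w,v) \<in> A" using wvE neq2 pq(2) fv fw unfolding A_def by simp
            then show ?thesis unfolding cimg_def using pq2 fv fw pnq by force
          qed
        qed
      qed
      then show "r \<in> restrict_arcs (V - {v}) (cimg u v A)" using pq unfolding restrict_arcs_def by blast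
    qed
  qed
  have finV: "finite V" using ug by (simp add: ugraph_def)
  have el: "elim_depth V A (dag_dtd V A)" by (rule dag_dtd_ex[OF finV acA])
  obtain e where e: "e \<le> dag_dtd V A" "elim_depth (V - {v}) (cimg u v A) e"
    using contract_depth[OF el acA acC uvA uv(2) finV uV vV] by blast
  from e(2) rr have "elim_depth (V - {v}) B e" by (rule elim_cong)
  then have "dag_dtd (V - {v}) B \<le> dag_dtd V A" using e(1) dag_dtd_le by (metis le_trans)
  then show "\<exists>A. acyclic_orientation V E A \<and> dag_dtd (V - {v}) B \<le> dag_dtd V A" using ao by blast
qed

lemma mapr_mem:
  assumes "inj_on f V0" "B \<subseteq> V0 \<times> V0" "a \<in> V0" "b \<in> V0"
  shows "(f a, f b) \<in> mapr f B \<longleftrightarrow> (a,b) \<in> B"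
proof
  assume "(f a, f b) \<in> mapr f B"
  then obtain a' b' where ab: "f a = f a'" "f b = f b'" "(a',b') \<in> B" unfolding mapr_def by blast
  then have "a' \<in> V0" "b' \<in> V0" using assms(2) by auto
  then have "a = a'" "b = b'" using ab(1,2) assms(1,3,4) by (auto simp: inj_on_eq_iff)
  then show "(a,b) \<in> B" using ab(3) by simp
next
  assume "(a,b) \<in> B" then show "(f a, f b) \<in> mapr f B" unfolding mapr_def by blast
qed

lemma mapr_inv:
  assumes "\<forall>a\<in>V0. g (f a) = a" "B \<subseteq> V0 \<times> V0"
  shows "mapr g (mapr f B) = B"
proof
  show "mapr g (mapr f B) \<subseteq> B"
  proof
    fix r assume "r \<in> mapr g (mapr f B)"
    then obtain p q where pq: "r = (g p, g q)" "(p,q) \<in> mapr f B" unfolding mapr_def by blast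
    then obtain a b where ab: "p = f a" "q = f b" "(a,b) \<in> B" unfolding mapr_def by blast
    then have "a \<in> V0" "b \<in> V0" using assms(2) by auto
    then show "r \<in> B" using pq(1) ab assms(1) by simp
  qed
  show "B \<subseteq> mapr g (mapr f B)"
  proof
    fix r assume r: "r \<in> B"
    then obtain a b where ab: "r = (a,b)" by (cases r)
    then have abV: "a \<in> V0" "b \<in> V0" using r assms(2) by auto
    have "(f a, f b) \<in> mapr f B" using r ab unfolding mapr_def by blast
    then have "(g (f a), g (f b)) \<in> mapr g (mapr f B)" unfolding mapr_def by blast
    then show "r \<in> mapr g (mapr f B)" using ab abV assms(1) by simp
  qed
qed

lemma dle_iso:
  assumes ugI: "ugraph VI EI" and ug2: "ugraph V2 E2" and iso: "graph_iso VI EI V2 E2"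
  shows "dle VI EI V2 E2"
  unfolding dle_def
proof (intro allI impI)
  fix B assume B: "acyclic_orientation VI EI B"
  obtain f where bij: "bij_betw f VI V2" and fe: "\<forall>x\<in>VI. \<forall>y\<in>VI. {x, y} \<in> EI \<longleftrightarrow> {f x, f y} \<in> E2"
    using iso unfolding graph_iso_def by blast
  have injf: "inj_on f VI" using bij by (simp add: bij_betw_def)
  have img: "f ` VI = V2" using bij by (simp add: bij_betw_def)
  have BV: "B \<subseteq> VI \<times> VI" by (rule ao_sub[OF ugI B])
  have acB: "acyclic B" by (rule ao_acyc[OF B])
  define A where "A = mapr f B"
  have acA: "acyclic A" unfolding acyclic_def
  proof (intro allI notI)
    fix p assume "(p,p) \<in> A\<^sup>+"
    then obtain c where c: "(p,c) \<in> A" "(c,p) \<in> A\<^sup>*" by (blast dest: tranclD)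
    from c(1) obtain a b where ab: "p = f a" "c = f b" "(a,b) \<in> B" unfolding A_def mapr_def by fastforce
    have abV: "a \<in> VI" "b \<in> VI" using ab(3) BV by auto
    have "(b,a) \<in> B\<^sup>*" using c(2) ab rtrancl_mapr[OF injf BV abV(2) abV(1)] unfolding A_def by simp
    then have "(a,a) \<in> B\<^sup>+" using ab(3) by (rule rtrancl_into_trancl2[rotated])
    then show False using acB unfolding acyclic_def by blast
  qed
  have ao: "acyclic_orientation V2 E2 A"
    unfolding acyclic_orientation_def
  proof (intro conjI allI impI)
    show "A \<subseteq> {(u, v). {u, v} \<in> E2}"
    proof
      fix r assume "r \<in> A"
      then obtain a b where ab: "r = (f a, f b)" "(a,b) \<in> B" unfolding A_def mapr_def by blast
      have abV: "a \<in> VI" "b \<in> VI" using ab(2) BV by auto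
      have "{a,b} \<in> EI" by (rule ao_edge[OF B ab(2)])
      then have "{f a, f b} \<in> E2" using fe abV by blast
      then show "r \<in> {(u, v). {u, v} \<in> E2}" using ab(1) by simp
    qed
    show "acyclic A" by (rule acA)
    fix x y assume xy: "{x,y} \<in> E2" "x \<noteq> y"
    have "x \<in> V2" "y \<in> V2" using ug_edge2[OF ug2 xy(1)] by blast+
    then have "x \<in> f ` VI" "y \<in> f ` VI" using img by simp_all
    then obtain a b where ab: "a \<in> VI" "b \<in> VI" "x = f a" "y = f b" by (meson imageE)
    have "{f a, f b} \<in> E2" using xy(1) ab(3,4) by simp
    then have abE: "{a,b} \<in> EI" using fe ab(1,2) by blast
    have anb: "a \<noteq> b" using ab xy(2) by blast
    have "(a,b) \<in> B \<longleftrightarrow> (b,a) \<notin> B" by (rule ao_orient[OF B abE anb])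
    moreover have "(f a, f b) \<in> mapr f B \<longleftrightarrow> (a,b) \<in> B" by (rule mapr_mem[OF injf BV ab(1,2)])
    moreover have "(f b, f a) \<in> mapr f B \<longleftrightarrow> (b,a) \<in> B" by (rule mapr_mem[OF injf BV ab(2,1)])
    ultimately show "(x, y) \<in> A \<longleftrightarrow> (y, x) \<notin> A"
      unfolding A_def ab(3,4) by blast
  qed
  have finV2: "finite V2" using ug2 by (simp add: ugraph_def)
  have el: "elim_depth V2 A (dag_dtd V2 A)" by (rule dag_dtd_ex[OF finV2 acA])
  let ?h = "inv_into VI f"
  have bh: "bij_betw ?h V2 VI" by (rule bij_betw_inv_into[OF bij])
  have injh: "inj_on ?h V2" using bh by (simp add: bij_betw_def)
  have imgh: "?h ` V2 = VI" using bh by (simp add: bij_betw_def)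
  have AV2: "A \<subseteq> V2 \<times> V2" unfolding A_def using mapr_sub[OF BV, of f] img by simp
  have "elim_depth (?h ` V2) (mapr ?h A) (dag_dtd V2 A)"
    by (rule elim_map[OF injh AV2 el HOL.refl order_refl])
  moreover have "mapr ?h A = B" unfolding A_def
    by (rule mapr_inv[OF _ BV]) (simp add: injf)
  ultimately have "elim_depth VI B (dag_dtd V2 A)" using imgh by simp
  then have "dag_dtd VI B \<le> dag_dtd V2 A" by (rule dag_dtd_le)
  then show "\<exists>A. acyclic_orientation V2 E2 A \<and> dag_dtd VI B \<le> dag_dtd V2 A" using ao by blast
qed

lemma ao_exists:
  assumes ug: "ugraph V E"
  shows "\<exists>A. acyclic_orientation V E A"
proof -
  have finV: "finite V" using ug by (simp add: ugraph_def)
  obtain g :: "'a \<Rightarrow> nat" and n where g: "g ` V = {i. i < n}" "inj_on g V"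
    using finite_imp_inj_to_nat_seg[OF finV] by blast
  define A where "A = {(a,b). {a,b} \<in> E \<and> g a < g b}"
  have "A \<subseteq> inv_image less_than g" unfolding A_def by auto
  moreover have "acyclic (inv_image less_than g)"
    by (rule wf_acyclic) (rule wf_inv_image[OF wf_less_than])
  ultimately have acA: "acyclic A" by (rule acyclic_subset[rotated])
  have "acyclic_orientation V E A"
    unfolding acyclic_orientation_def
  proof (intro conjI allI impI)
    show "A \<subseteq> {(u, v). {u, v} \<in> E}" unfolding A_def by blast
    show "acyclic A" by (rule acA)
    fix a b assume ab: "{a,b} \<in> E" "a \<noteq> b"
    have "a \<in> V" "b \<in> V" using ug_edge2[OF ug ab(1)] by blast+
    then have "g a \<noteq> g b" using g(2) ab(2) by (auto simp: inj_on_eq_iff)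
    moreover have "{b,a} \<in> E" using ab(1) by (simp add: insert_commute)
    ultimately show "(a, b) \<in> A \<longleftrightarrow> (b, a) \<notin> A" using ab(1) unfolding A_def by auto
  qed
  then show ?thesis by blast
qed

lemma ao_finite:
  assumes "ugraph V E"
  shows "finite {A. acyclic_orientation V E A}"
proof -
  have finV: "finite V" using assms by (simp add: ugraph_def)
  have "{A. acyclic_orientation V E A} \<subseteq> Pow (V \<times> V)" using ao_sub[OF assms] by blast
  moreover have "finite (Pow (V \<times> V))" using finV by simp
  ultimately show ?thesis by (rule finite_subset)
qed

lemma dtd_mono:
  assumes ug1: "ugraph V1 E1" and ug2: "ugraph V2 E2" and d: "dle V1 E1 V2 E2"
  shows "dtd V1 E1 \<le> dtd V2 E2"
proof -
  have S1: "{dag_dtd V1 B | B. acyclic_orientation V1 E1 B} = dag_dtd V1 ` {B. acyclic_orientation V1 E1 B}"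
    by (rule setcompr_eq_image)
  have S2: "{dag_dtd V2 A | A. acyclic_orientation V2 E2 A} = dag_dtd V2 ` {A. acyclic_orientation V2 E2 A}"
    by (rule setcompr_eq_image)
  have f1: "finite (dag_dtd V1 ` {B. acyclic_orientation V1 E1 B})" using ao_finite[OF ug1] by simp
  have f2: "finite (dag_dtd V2 ` {A. acyclic_orientation V2 E2 A})" using ao_finite[OF ug2] by simp
  have ne1: "dag_dtd V1 ` {B. acyclic_orientation V1 E1 B} \<noteq> {}" using ao_exists[OF ug1] by blast
  have "Max (dag_dtd V1 ` {B. acyclic_orientation V1 E1 B}) \<in> dag_dtd V1 ` {B. acyclic_orientation V1 E1 B}"
    by (rule Max_in[OF f1 ne1])
  then obtain B where B: "acyclic_orientation V1 E1 B" "dtd V1 E1 = dag_dtd V1 B"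
    unfolding dtd_def S1 by blast
  then obtain A where A: "acyclic_orientation V2 E2 A" "dag_dtd V1 B \<le> dag_dtd V2 A"
    using d unfolding dle_def by blast
  have "dag_dtd V2 A \<le> Max (dag_dtd V2 ` {A. acyclic_orientation V2 E2 A})"
    by (rule Max_ge[OF f2]) (use A(1) in blast)
  then show ?thesis using A(2) B(2) unfolding dtd_def S2 by simp
qed

lemma obt_dle:
  "obtainable G G' \<Longrightarrow> ugraph (fst G) (snd G) \<Longrightarrow>
    ugraph (fst G') (snd G') \<and> dle (fst G') (snd G') (fst G) (snd G)"
proof (induction rule: obtainable.induct)
  case (refl G)
  then show ?case using dle_refl by blast
next
  case (del G G' x)
  have ug: "ugraph (fst G') (snd G')" and d: "dle (fst G') (snd G') (fst G) (snd G)"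
    using del.IH del.prems by blast+
  have "ugraph (fst G' - {x}) {e \<in> snd G'. x \<notin> e}" by (rule ug_delete[OF ug])
  moreover have "dle (fst G' - {x}) {e \<in> snd G'. x \<notin> e} (fst G) (snd G)"
    by (rule dle_trans[OF dle_delete[OF ug del.hyps(2)] d])
  ultimately show ?case by (simp add: delete_vertex_def)
next
  case (con G G' u v)
  have ug: "ugraph (fst G') (snd G')" and d: "dle (fst G') (snd G') (fst G) (snd G)"
    using con.IH con.prems by blast+
  have "ugraph (fst G' - {v}) ({e \<in> snd G'. v \<notin> e} \<union> {{u, w} | w. {v, w} \<in> snd G' \<and> w \<noteq> u})"
    by (rule ug_contract[OF ug con.hyps(2,3)])
  moreover have "dle (fst G' - {v}) ({e \<in> snd G'. v \<notin> e} \<union> {{u, w} | w. {v, w} \<in> snd G' \<and> w \<noteq> u}) (fst G) (snd G)"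
    by (rule dle_trans[OF dle_contract[OF ug con.hyps(2,3)] d])
  ultimately show ?case by (simp add: contract_edge_def)
qed

theorem mainTheorem7:
  fixes VH :: "'a set" and EH :: "'a set set" and VI :: "'b set" and EI :: "'b set set"
  assumes "ugraph VH EH" and "ugraph VI EI"
    and "induced_minor VI EI VH EH"
  shows "dtd VI EI \<le> dtd VH EH"
proof -
  obtain G' where G': "obtainable (VH, EH) G'" "graph_iso VI EI (fst G') (snd G')"
    using assms(3) unfolding induced_minor_def by blast
  have "ugraph (fst G') (snd G') \<and> dle (fst G') (snd G') VH EH"
    using obt_dle[OF G'(1)] assms(1) by simp
  then have ugG: "ugraph (fst G') (snd G')" and d1: "dle (fst G') (snd G') VH EH" by blast+
  have d2: "dle VI EI (fst G') (snd G')" by (rule dle_iso[OF assms(2) ugG G'(2)])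
  have "dle VI EI VH EH" by (rule dle_trans[OF d2 d1])
  then show ?thesis by (rule dtd_mono[OF assms(2,1)])
qed

end
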